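(* In the setting described in the context, there exists a collection $\Gamma=\{\gamma_{xy}:(x,y)\in\Omega_{worm}\times\Omega_0\}$, where each $\gamma_{xy}$ is a path from $x$ to $y$ through states of $\Omega_{worm}$ in which consecutive states differ in exactly one edge of $E_C$ (i.e. each step is a move of the chain $P$), such that $$\varrho(\Omega_0;\Gamma)\le m^5|E_C|.$$
   Context: Let $\beta>1$. Let $G=(V,E)$ be a finite connected simple 4-regular graph with, at each vertex, its four incident edges labelled bijectively $x_1,\dots,x_4$. Each edge has two half-edges. Pairing at each vertex slot $x_1$ with $x_4$ and $x_2$ with $x_3$, and following edges by entering a vertex through one slot of a pair and leaving through the other, partitions $E$ into closed trails (circuits) $C_1,\dots,C_m$, each with a fixed reference half-edge $h_i$. Consider maps $\sigma$ from half-edges to $\{0,1\}$ with opposite values on the two half-edges of each edge and nonzero weight for the vertex function $f^*$ with $f^*(0011)=f^*(1100)=\beta$, $f^*(0101)=f^*(1010)=1$, $f^*=0$ otherwise (evaluated at $v$ on its half-edges in slot order $x_1,\dots,x_4$); values alternate along circuits and $\sigma(C_i):=\sigma(h_i)$. A vertex where $\{x_1,x_4\}$ lies on $C_i$ and $\{x_2,x_3\}$ on $C_j$, $i\ne j$, is an agree-vertex if its weight is $\beta$ exactly when $\sigma(C_i)=\sigma(C_j)$ (else $1$), and a disagree-vertex if its weight is $\beta$ exactly when $\sigma(C_i)\ne\sigma(C_j)$; $A(i,j),D(i,j)$ count these. $G_C=(\mathcal{C},E_C)$, $\mathcal{C}=\{C_1,\dots,C_m\}$, has edge $\{C_i,C_j\}$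 iff $i\ne j$ and they share such a vertex. Assume the system $X_u\oplus X_v=\mathbf{I}(A(u,v)<D(u,v))$, $\{u,v\}\in E_C$, has a solution over $\mathrm{GF}(2)$; for each $i$ with $X_i=1$ replace $h_i$ by an adjacent half-edge of $C_i$, recompute $A,D$, and set $\beta_e=\beta^{A(u,v)-D(u,v)}$, $x_e=(\beta_e-1)/(\beta_e+1)$ for $e=\{u,v\}\in E_C$. Worm process. $\Omega_k$ is the set of $S\subseteq E_C$ with exactly $k$ odd-degree vertices in $(\mathcal{C},S)$; $\partial S$ is that set of odd-degree vertices; $\Omega_{worm}=\Omega_0\cup\Omega_2$. $w(S)=\prod_{e\in S}x_e$, $Z_k=\sum_{S\in\Omega_k}w(S)$, $\xi(S)=m$ on $\Omega_0$, $2$ on $\Omega_2$, $0$ otherwise, $\pi_{worm}(S)=\xi(S)w(S)/(mZ_0+2Z_2)$. $d(u)$ is the degree of $u$ in $G_C$. The transition matrix $P$ on $\Omega_{worm}$: for $A\in\Omega_{worm}$ and $\{u,v\}\in E_C$, writing $A\oplus uv$ for the symmetric difference of $A$ with $\{\{u,v\}\}$: $P(A,A\oplus uv)=x_{uv}^{\mathbf{I}(uv\notin A)}\frac{1}{2m}\big(\frac{1}{d(u)}+\frac1{d(v)}\big)$ if $A\in\Omega_0$; $=x_{uv}^{\mathbf{I}(uv\notin A)}\frac14\big(\frac1{d(u)}+\frac1{d(v)}\big)$ if $A\oplus uv\in\Omega_0$; $=\min\!\big(1,\frac{d(u)}{d(v)}x_{uv}^{\mathbf{I}(uv\notin A)-\mathbf{I}(uv\in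 A)}\big)\frac1{4d(u)}$ if $A,A\oplus uv\in\Omega_2$ and $u\in\partial A$; all other off-diagonal entries are $0$ and each diagonal entry is $1$ minus the other entries of its row. Congestion. For $\Psi\subseteq\Omega_{worm}$ and a collection $\Gamma$ of paths $\gamma_{xy}$, $(x,y)\in\Omega_{worm}\times\Psi$, with $L(\Gamma)$ the length of the longest path, $$\varrho(\Psi;\Gamma)=\max_{(z,z')\,:\,P(z,z')>0}\frac{L(\Gamma)}{\pi_{worm}(\Psi)\pi_{worm}(z)P(z,z')}\sum_{(x,y)\in\Omega_{worm}\times\Psi,\ \gamma_{xy}\ni(z,z')}\pi_{worm}(x)\pi_{worm}(y).$$ *)

theory Defs
  imports Complex_Main
begin

text \<open>Half-edges are pairs (v,k) with v a vertex and k in {1..4} the slot label x_k.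
  The map opp sends a half-edge to the other half-edge of the same edge.\<close>

definition HE :: "'v set \<Rightarrow> ('v \<times> nat) set" where
  "HE V = V \<times> {1..4}"

definition partner :: "'v \<times> nat \<Rightarrow> 'v \<times> nat" where
  "partner h = (fst h, 5 - snd h)"

definition adj :: "'v set \<Rightarrow> ('v \<times> nat \<Rightarrow> 'v \<times> nat) \<Rightarrow> ('v \<times> 'v) set" where
  "adj V opp = {(fst h, fst (opp h)) | h. h \<in> HE V}"

definition labelled_4reg :: "'v set \<Rightarrow> ('v \<times> nat \<Rightarrow> 'v \<times> nat) \<Rightarrow> bool" where
  "labelled_4reg V opp \<longleftrightarrow>
     finite V \<and> V \<noteq> {} \<and>
     (\<forall>h\<in>HE V. opp h \<in> HE V \<and> opp (opp h) = h \<and> fst (opp h) \<noteq> fst h) \<and>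
     (\<forall>v\<in>V. \<forall>i\<in>{1..4}. \<forall>j\<in>{1..4}. i \<noteq> j \<longrightarrow> fst (opp (v,i)) \<noteq> fst (opp (v,j))) \<and>
     (\<forall>u\<in>V. \<forall>w\<in>V. (u, w) \<in> (adj V opp)\<^sup>*)"

text \<open>Circuits: closed trails, as sets of half-edges = classes of the equivalence
  generated by opp (traversing an edge) and partner (passing through a vertex).\<close>
definition circ_step :: "'v set \<Rightarrow> ('v \<times> nat \<Rightarrow> 'v \<times> nat) \<Rightarrow> (('v \<times> nat) \<times> ('v \<times> nat)) set" where
  "circ_step V opp = {(h, opp h) | h. h \<in> HE V} \<union> {(h, partner h) | h. h \<in> HE V}"

definition circuits :: "'v set \<Rightarrow> ('v \<times> nat \<Rightarrow> 'v \<times> nat) \<Rightarrow> ('v \<times> nat) set set" where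
  "circuits V opp = {(circ_step V opp)\<^sup>* `` {h} | h. h \<in> HE V}"

text \<open>Vertex function f*, with False = 0 and True = 1.\<close>
definition fstar :: "real \<Rightarrow> bool \<Rightarrow> bool \<Rightarrow> bool \<Rightarrow> bool \<Rightarrow> real" where
  "fstar \<beta> a b c d =
     (if (a, b, c, d) = (False, False, True, True) \<or> (a, b, c, d) = (True, True, False, False) then \<beta>
      else if (a, b, c, d) = (False, True, False, True) \<or> (a, b, c, d) = (True, False, True, False) then 1
      else 0)"

definition vweight :: "real \<Rightarrow> ('v \<times> nat \<Rightarrow> bool) \<Rightarrow> 'v \<Rightarrow> real" where
  "vweight \<beta> \<sigma> v = fstar \<beta> (\<sigma> (v,1)) (\<sigma> (v,2)) (\<sigma> (v,3)) (\<sigma> (v,4))"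

definition valid_sigma :: "'v set \<Rightarrow> ('v \<times> nat \<Rightarrow> 'v \<times> nat) \<Rightarrow> real \<Rightarrow> ('v \<times> nat \<Rightarrow> bool) \<Rightarrow> bool" where
  "valid_sigma V opp \<beta> \<sigma> \<longleftrightarrow>
     (\<forall>h\<in>HE V. \<sigma> (opp h) = (\<not> \<sigma> h)) \<and> (\<forall>v\<in>V. vweight \<beta> \<sigma> v \<noteq> 0)"

text \<open>h is the choice of reference half-edges, sigma(C) = sigma(h C).\<close>
definition agree_vertex :: "'v set \<Rightarrow> ('v \<times> nat \<Rightarrow> 'v \<times> nat) \<Rightarrow> real \<Rightarrow> (('v \<times> nat) set \<Rightarrow> 'v \<times> nat)
     \<Rightarrow> 'v \<Rightarrow> ('v \<times> nat) set \<Rightarrow> ('v \<times> nat) set \<Rightarrow> bool" where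
  "agree_vertex V opp \<beta> h v C D \<longleftrightarrow>
     (\<forall>\<sigma>. valid_sigma V opp \<beta> \<sigma> \<longrightarrow> (vweight \<beta> \<sigma> v = \<beta> \<longleftrightarrow> \<sigma> (h C) = \<sigma> (h D)))"

definition disagree_vertex :: "'v set \<Rightarrow> ('v \<times> nat \<Rightarrow> 'v \<times> nat) \<Rightarrow> real \<Rightarrow> (('v \<times> nat) set \<Rightarrow> 'v \<times> nat)
     \<Rightarrow> 'v \<Rightarrow> ('v \<times> nat) set \<Rightarrow> ('v \<times> nat) set \<Rightarrow> bool" where
  "disagree_vertex V opp \<beta> h v C D \<longleftrightarrow>
     (\<forall>\<sigma>. valid_sigma V opp \<beta> \<sigma> \<longrightarrow> (vweight \<beta> \<sigma> v = \<beta> \<longleftrightarrow> \<sigma> (h C) \<noteq> \<sigma> (h D)))"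

text \<open>A(e), D(e) for e = {C,D}: vertices where {x1,x4} lies on one of the two circuits
  and {x2,x3} on the other (either order).\<close>
definition A_cnt :: "'v set \<Rightarrow> ('v \<times> nat \<Rightarrow> 'v \<times> nat) \<Rightarrow> real \<Rightarrow> (('v \<times> nat) set \<Rightarrow> 'v \<times> nat)
     \<Rightarrow> ('v \<times> nat) set set \<Rightarrow> nat" where
  "A_cnt V opp \<beta> h e = card {v \<in> V. \<exists>C D. e = {C, D} \<and> C \<noteq> D \<and> (v,1) \<in> C \<and> (v,2) \<in> D
                                     \<and> agree_vertex V opp \<beta> h v C D}"

definition D_cnt :: "'v set \<Rightarrow> ('v \<times> nat \<Rightarrow> 'v \<times> nat) \<Rightarrow> real \<Rightarrow> (('v \<times> nat) set \<Rightarrow> 'v \<times> nat)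
     \<Rightarrow> ('v \<times> nat) set set \<Rightarrow> nat" where
  "D_cnt V opp \<beta> h e = card {v \<in> V. \<exists>C D. e = {C, D} \<and> C \<noteq> D \<and> (v,1) \<in> C \<and> (v,2) \<in> D
                                     \<and> disagree_vertex V opp \<beta> h v C D}"

definition EC :: "'v set \<Rightarrow> ('v \<times> nat \<Rightarrow> 'v \<times> nat) \<Rightarrow> ('v \<times> nat) set set set" where
  "EC V opp = {{C, D} | C D. C \<in> circuits V opp \<and> D \<in> circuits V opp \<and> C \<noteq> D \<and>
                            (\<exists>v\<in>V. (v,1) \<in> C \<and> (v,2) \<in> D)}"

definition xw :: "'v set \<Rightarrow> ('v \<times> nat \<Rightarrow> 'v \<times> nat) \<Rightarrow> real \<Rightarrow> (('v \<times> nat) set \<Rightarrow> 'v \<times> nat)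
     \<Rightarrow> ('v \<times> nat) set set \<Rightarrow> real" where
  "xw V opp \<beta> h e =
     (let b = \<beta> powi (int (A_cnt V opp \<beta> h e) - int (D_cnt V opp \<beta> h e)) in (b - 1) / (b + 1))"

definition deg :: "'c set set \<Rightarrow> 'c \<Rightarrow> nat" where
  "deg Es u = card {e \<in> Es. u \<in> e}"

definition odd_verts :: "'c set \<Rightarrow> 'c set set \<Rightarrow> 'c set" where
  "odd_verts Cs S = {u \<in> Cs. odd (card {e \<in> S. u \<in> e})}"

definition Omega :: "'c set \<Rightarrow> 'c set set \<Rightarrow> nat \<Rightarrow> 'c set set set" where
  "Omega Cs Es k = {S. S \<subseteq> Es \<and> card (odd_verts Cs S) = k}"

definition Omega_worm :: "'c set \<Rightarrow> 'c set set \<Rightarrow> 'c set set set" where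
  "Omega_worm Cs Es = Omega Cs Es 0 \<union> Omega Cs Es 2"

definition wt :: "('c set \<Rightarrow> real) \<Rightarrow> 'c set set \<Rightarrow> real" where
  "wt x S = (\<Prod>e\<in>S. x e)"

definition Zk :: "'c set \<Rightarrow> 'c set set \<Rightarrow> ('c set \<Rightarrow> real) \<Rightarrow> nat \<Rightarrow> real" where
  "Zk Cs Es x k = (\<Sum>S\<in>Omega Cs Es k. wt x S)"

definition xi :: "'c set \<Rightarrow> 'c set set \<Rightarrow> 'c set set \<Rightarrow> real" where
  "xi Cs Es S = (if S \<in> Omega Cs Es 0 then real (card Cs) else if S \<in> Omega Cs Es 2 then 2 else 0)"

definition pi_worm :: "'c set \<Rightarrow> 'c set set \<Rightarrow> ('c set \<Rightarrow> real) \<Rightarrow> 'c set set \<Rightarrow> real" where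
  "pi_worm Cs Es x S = xi Cs Es S * wt x S / (real (card Cs) * Zk Cs Es x 0 + 2 * Zk Cs Es x 2)"

definition pi_set :: "'c set \<Rightarrow> 'c set set \<Rightarrow> ('c set \<Rightarrow> real) \<Rightarrow> 'c set set set \<Rightarrow> real" where
  "pi_set Cs Es x Psi = (\<Sum>S\<in>Psi. pi_worm Cs Es x S)"

definition toggle :: "'c set set \<Rightarrow> 'c set \<Rightarrow> 'c set set" where
  "toggle A e = (if e \<in> A then A - {e} else insert e A)"

text \<open>The factor
  x^(I(e notin A) - I(e in A)) inside the min is rendered as: x if e notin A, and
  min(1, r / x) written as (if x <= r then 1 else r / x) if e in A (so x = 0 gives 1).\<close>
definition P_move :: "'c set \<Rightarrow> 'c set set \<Rightarrow> ('c set \<Rightarrow> real) \<Rightarrow> 'c set set \<Rightarrow> 'c set \<Rightarrow> real" where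
  "P_move Cs Es x A e =
    (let ex = (if e \<notin> A then x e else 1);
         s = (\<Sum>u\<in>e. 1 / real (deg Es u)) in
     if A \<in> Omega Cs Es 0 then ex * (1 / (2 * real (card Cs))) * s
     else if toggle A e \<in> Omega Cs Es 0 then ex * (1 / 4) * s
     else if A \<in> Omega Cs Es 2 \<and> toggle A e \<in> Omega Cs Es 2 then
       (let u = (THE u. u \<in> e \<and> u \<in> odd_verts Cs A);
            v = (THE v. v \<in> e \<and> v \<noteq> u);
            r = real (deg Es u) / real (deg Es v) in
        (if e \<notin> A then min 1 (r * x e) else (if x e \<le> r then 1 else r / x e))
          * (1 / (4 * real (deg Es u))))
     else 0)"

definition P_off :: "'c set \<Rightarrow> 'c set set \<Rightarrow> ('c set \<Rightarrow> real) \<Rightarrow> 'c set set \<Rightarrow> 'c set set \<Rightarrow> real" where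
  "P_off Cs Es x A B =
     (if A \<noteq> B \<and> (\<exists>e\<in>Es. B = toggle A e) then P_move Cs Es x A (THE e. e \<in> Es \<and> B = toggle A e) else 0)"

definition P_worm :: "'c set \<Rightarrow> 'c set set \<Rightarrow> ('c set \<Rightarrow> real) \<Rightarrow> 'c set set \<Rightarrow> 'c set set \<Rightarrow> real" where
  "P_worm Cs Es x A B =
     (if A = B then 1 - (\<Sum>B'\<in>Omega_worm Cs Es - {A}. P_off Cs Es x A B') else P_off Cs Es x A B)"

definition is_worm_path :: "'c set \<Rightarrow> 'c set set \<Rightarrow> 'c set set \<Rightarrow> 'c set set \<Rightarrow> 'c set set list \<Rightarrow> bool" where
  "is_worm_path Cs Es a b p \<longleftrightarrow>
     p \<noteq> [] \<and> hd p = a \<and> last p = b \<and> set p \<subseteq> Omega_worm Cs Es \<and>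
     (\<forall>(s, t)\<in>set (zip p (tl p)). \<exists>e\<in>Es. t = toggle s e)"

definition transitions :: "'s list \<Rightarrow> ('s \<times> 's) set" where
  "transitions p = set (zip p (tl p))"

definition congestion :: "'c set \<Rightarrow> 'c set set \<Rightarrow> ('c set \<Rightarrow> real) \<Rightarrow> 'c set set set
     \<Rightarrow> ('c set set \<Rightarrow> 'c set set \<Rightarrow> 'c set set list) \<Rightarrow> real" where
  "congestion Cs Es x Psi gam =
    (let Ow = Omega_worm Cs Es;
         L = real (Max {length (gam a b) - 1 | a b. a \<in> Ow \<and> b \<in> Psi}) in
     Max ((\<lambda>(z, z'). L / (pi_set Cs Es x Psi * pi_worm Cs Es x z * P_worm Cs Es x z z') *
              (\<Sum>(a, b)\<in>{(a, b). a \<in> Ow \<and> b \<in> Psi \<and> (z, z') \<in> transitions (gam a b)}.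
                  pi_worm Cs Es x a * pi_worm Cs Es x b))
          ` {(z, z'). z \<in> Ow \<and> z' \<in> Ow \<and> P_worm Cs Es x z z' > 0}))"

end

theory Submission
  imports Defs
begin


definition sd :: "'a set \<Rightarrow> 'a set \<Rightarrow> 'a set" where
  "sd A B = (A - B) \<union> (B - A)"

lemma card_sd_add:
  assumes "finite X" "finite Y"
  shows "card (sd X Y) + 2 * card (X \<inter> Y) = card X + card Y"
proof -
  have 1: "card X = card (X - Y) + card (X \<inter> Y)"
    using card_Int_Diff[OF assms(1), of Y] by simp
  have 2: "card Y = card (Y - X) + card (X \<inter> Y)"
    using card_Int_Diff[OF assms(2), of X] by (simp add: Int_commute)
  have 3: "card (sd X Y) = card (X - Y) + card (Y - X)"
    unfolding sd_def using assms by (subst card_Un_disjoint) auto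
  show ?thesis using 1 2 3 by simp
qed

lemma odd_verts_sd:
  assumes "finite A" "finite B"
  shows "odd_verts Cs (sd A B) = sd (odd_verts Cs A) (odd_verts Cs B)"
proof -
  have "odd (card {e \<in> sd A B. u \<in> e}) \<longleftrightarrow> (odd (card {e \<in> A. u \<in> e}) \<noteq> odd (card {e \<in> B. u \<in> e}))" for u
  proof -
    have eq1: "{e \<in> sd A B. u \<in> e} = sd {e \<in> A. u \<in> e} {e \<in> B. u \<in> e}" unfolding sd_def by auto
    have eq2: "{e \<in> A. u \<in> e} \<inter> {e \<in> B. u \<in> e} = {e \<in> A \<inter> B. u \<in> e}" by auto
    have "card (sd {e \<in> A. u \<in> e} {e \<in> B. u \<in> e}) + 2 * card ({e \<in> A. u \<in> e} \<inter> {e \<in> B. u \<in> e})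
        = card {e \<in> A. u \<in> e} + card {e \<in> B. u \<in> e}"
      by (rule card_sd_add) (use assms in auto)
    then show ?thesis unfolding eq1 by presburger
  qed
  then show ?thesis unfolding odd_verts_def sd_def by auto
qed

lemma even_sum_card: "finite A \<Longrightarrow> even (sum (f::'a \<Rightarrow> nat) A) \<longleftrightarrow> even (card {a \<in> A. odd (f a)})"
proof (induction A rule: finite_induct)
  case empty then show ?case by simp
next
  case (insert a A)
  show ?case
  proof (cases "odd (f a)")
    case True
    then have "{b \<in> insert a A. odd (f b)} = insert a {b \<in> A. odd (f b)}" by auto
    then show ?thesis using insert True by simp
  next
    case False
    then have "{b \<in> insert a A. odd (f b)} = {b \<in> A. odd (f b)}" by auto
    then show ?thesis using insert False by simp
  qed
qed

locale wg =
  fixes Cs :: "'c set" and Es :: "'c set set" and x :: "'c set \<Rightarrow> real"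
  assumes finCs: "finite Cs"
  and edges: "\<And>e. e \<in> Es \<Longrightarrow> \<exists>p q. p \<in> Cs \<and> q \<in> Cs \<and> p \<noteq> q \<and> e = {p, q}"
  and xnn: "\<And>e. e \<in> Es \<Longrightarrow> 0 \<le> x e" and xle: "\<And>e. e \<in> Es \<Longrightarrow> x e \<le> 1"
begin

lemma Es_Pow: "Es \<subseteq> Pow Cs" using edges by blast

lemma finEs: "finite Es" using Es_Pow finCs by (meson finite_Pow_iff finite_subset)

lemma fin_sub: "S \<subseteq> Es \<Longrightarrow> finite S" using finEs finite_subset by blast

lemma odd_sub: "odd_verts Cs S \<subseteq> Cs" unfolding odd_verts_def by auto

lemma odd_single: assumes "e \<in> Es" shows "odd_verts Cs {e} = e"
proof -
  obtain p q where "p \<in> Cs" "q \<in> Cs" "p \<noteq> q" "e = {p,q}" using edges[OF assms] by blast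
  then have eC: "e \<subseteq> Cs" by blast
  have "\<And>u. {f \<in> {e}. u \<in> f} = (if u \<in> e then {e} else {})" by auto
  then have "\<And>u. card {f \<in> {e}. u \<in> f} = (if u \<in> e then 1 else 0)" by simp
  then show ?thesis unfolding odd_verts_def using eC by auto
qed

lemma wt_nn: "S \<subseteq> Es \<Longrightarrow> 0 \<le> wt x S"
  unfolding wt_def by (rule prod_nonneg) (use xnn in auto)

definition sg :: "'c set \<Rightarrow> 'c set \<Rightarrow> real" where
  "sg A Q = (-1) ^ card (A \<inter> Q)"

lemma sg_mult: assumes "finite Q" shows "sg A Q * sg B Q = sg (sd A B) Q"
proof -
  have "card (sd (A \<inter> Q) (B \<inter> Q)) + 2 * card ((A \<inter> Q) \<inter> (B \<inter> Q)) = card (A \<inter> Q) + card (B \<inter> Q)"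
    by (rule card_sd_add) (use assms in auto)
  moreover have "sd (A \<inter> Q) (B \<inter> Q) = sd A B \<inter> Q" unfolding sd_def by auto
  ultimately have "card (A \<inter> Q) + card (B \<inter> Q) = card (sd A B \<inter> Q) + 2 * card (A \<inter> B \<inter> Q)"
    by (simp add: Int_ac)
  then have "(-1::real) ^ (card (A \<inter> Q) + card (B \<inter> Q)) = (-1) ^ card (sd A B \<inter> Q)"
    by (simp add: power_add power_mult)
  then show ?thesis unfolding sg_def by (simp add: power_add)
qed

lemma sg_abs: "\<bar>sg A Q\<bar> = 1" unfolding sg_def by simp

lemma orth: assumes "A \<subseteq> Cs"
  shows "(\<Sum>Q\<in>Pow Cs. sg A Q) = (if A = {} then 2 ^ card Cs else 0)"
proof (cases "A = {}")
  case True
  then show ?thesis using finCs by (simp add: sg_def card_Pow)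
next
  case False
  then obtain a where a: "a \<in> A" by blast
  with assms have aC: "a \<in> Cs" by blast
  define C' where "C' = Cs - {a}"
  have Cs: "Cs = insert a C'" using aC C'_def by blast
  have aC': "a \<notin> C'" using C'_def by blast
  have fC': "finite C'" using finCs C'_def by simp
  have "Pow Cs = Pow C' \<union> insert a ` Pow C'" using Cs by (simp add: Pow_insert)
  moreover have "Pow C' \<inter> insert a ` Pow C' = {}" using aC' by auto
  ultimately have "(\<Sum>Q\<in>Pow Cs. sg A Q) = (\<Sum>Q\<in>Pow C'. sg A Q) + (\<Sum>Q\<in>insert a ` Pow C'. sg A Q)"
    using fC' by (simp add: sum.union_disjoint)
  also have "(\<Sum>Q\<in>insert a ` Pow C'. sg A Q) = (\<Sum>Q\<in>Pow C'. sg A (insert a Q))"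
    by (rule sum.reindex_cong[where l="insert a"]) (use aC' in \<open>auto simp: inj_on_def\<close>)
  also have "\<dots> = (\<Sum>Q\<in>Pow C'. - sg A Q)"
  proof (rule sum.cong)
    fix Q assume "Q \<in> Pow C'"
    then have "a \<notin> Q" "finite Q" using aC' fC' finite_subset by auto
    then have "A \<inter> insert a Q = insert a (A \<inter> Q)" "a \<notin> A \<inter> Q" using a by auto
    then show "sg A (insert a Q) = - sg A Q" unfolding sg_def using \<open>finite Q\<close> by simp
  qed simp
  finally show ?thesis using False by (simp add: sum_negf)
qed

lemma prod_sg: assumes "S \<subseteq> Es" "Q \<subseteq> Cs"
  shows "(\<Prod>e\<in>S. sg e Q) = sg (odd_verts Cs S) Q"
proof -
  have fS: "finite S" using assms fin_sub by blast
  have fQ: "finite Q" using assms finCs finite_subset by blast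
  have "(\<Prod>e\<in>S. sg e Q) = (-1) ^ (\<Sum>e\<in>S. card (e \<inter> Q))"
    unfolding sg_def by (rule power_sum[symmetric])
  also have "(\<Sum>e\<in>S. card (e \<inter> Q)) = (\<Sum>u\<in>Q. card {e \<in> S. u \<in> e})"
  proof -
    have "(\<Sum>e\<in>S. card (e \<inter> Q)) = (\<Sum>e\<in>S. \<Sum>u\<in>Q. if u \<in> e then 1 else 0)"
    proof (rule sum.cong)
      fix e assume "e \<in> S"
      have "e \<inter> Q = {u \<in> Q. u \<in> e}" by blast
      then have "card (e \<inter> Q) = card {u \<in> Q. u \<in> e}" by simp
      also have "\<dots> = (\<Sum>u\<in>{u \<in> Q. u \<in> e}. 1)" by simp
      also have "\<dots> = (\<Sum>u\<in>Q. if u \<in> e then 1 else 0)" by (rule sum.inter_filter[OF fQ])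
      finally show "card (e \<inter> Q) = (\<Sum>u\<in>Q. if u \<in> e then 1 else 0)" .
    qed simp
    also have "\<dots> = (\<Sum>u\<in>Q. \<Sum>e\<in>S. if u \<in> e then 1 else 0)" by (rule sum.swap)
    also have "\<dots> = (\<Sum>u\<in>Q. card {e \<in> S. u \<in> e})"
      by (rule sum.cong[OF refl]) (simp add: sum.inter_filter[OF fS, symmetric])
    finally show ?thesis .
  qed
  also have "(-1::real) ^ (\<Sum>u\<in>Q. card {e \<in> S. u \<in> e}) = (-1) ^ card (odd_verts Cs S \<inter> Q)"
  proof -
    have "odd_verts Cs S \<inter> Q = {u \<in> Q. odd (card {e \<in> S. u \<in> e})}"
      using assms unfolding odd_verts_def by auto
    then have "even (\<Sum>u\<in>Q. card {e \<in> S. u \<in> e}) \<longleftrightarrow> even (card (odd_verts Cs S \<inter> Q))"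
      using even_sum_card[OF fQ] by simp
    then show ?thesis by (cases "even (card (odd_verts Cs S \<inter> Q))") auto
  qed
  finally show ?thesis unfolding sg_def .
qed

definition FF :: "'c set \<Rightarrow> real" where
  "FF Q = (\<Prod>e\<in>Es. 1 + x e * sg e Q)"

lemma FF_nn: "0 \<le> FF Q"
  unfolding FF_def
proof (rule prod_nonneg)
  fix e assume "e \<in> Es"
  then have "0 \<le> x e" "x e \<le> 1" using xnn xle by auto
  moreover have "sg e Q = 1 \<or> sg e Q = -1" unfolding sg_def by (cases "even (card (e \<inter> Q))") auto
  ultimately show "0 \<le> 1 + x e * sg e Q" by auto
qed

lemma FF_expand: assumes "Q \<subseteq> Cs"
  shows "FF Q = (\<Sum>S\<in>Pow Es. wt x S * sg (odd_verts Cs S) Q)"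
proof -
  have "FF Q = (\<Prod>e\<in>Es. x e * sg e Q + 1)" unfolding FF_def by (simp add: add.commute)
  also have "\<dots> = (\<Sum>S\<in>Pow Es. (\<Prod>e\<in>S. x e * sg e Q) * (\<Prod>e\<in>Es-S. 1))"
    by (rule prod_add[OF finEs])
  also have "\<dots> = (\<Sum>S\<in>Pow Es. wt x S * sg (odd_verts Cs S) Q)"
  proof (rule sum.cong)
    fix S assume "S \<in> Pow Es"
    then show "(\<Prod>e\<in>S. x e * sg e Q) * (\<Prod>e\<in>Es-S. 1) = wt x S * sg (odd_verts Cs S) Q"
      using prod_sg[of S Q] assms unfolding wt_def by (simp add: prod.distrib)
  qed simp
  finally show ?thesis .
qed

lemma ZW_le: "(\<Sum>S\<in>{S. S \<subseteq> Es \<and> odd_verts Cs S = W}. wt x S) \<le> Zk Cs Es x 0"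
proof -
  have Z0: "Zk Cs Es x 0 = (\<Sum>S\<in>{S. S \<subseteq> Es \<and> odd_verts Cs S = {}}. wt x S)"
  proof -
    have "Omega Cs Es 0 = {S. S \<subseteq> Es \<and> odd_verts Cs S = {}}"
      unfolding Omega_def using finite_subset[OF odd_sub finCs] by auto
    then show ?thesis unfolding Zk_def by simp
  qed
  have key: "(\<Sum>Q\<in>Pow Cs. sg W Q * FF Q) = 2 ^ card Cs * (\<Sum>S\<in>{S. S \<subseteq> Es \<and> odd_verts Cs S = W}. wt x S)"
    if W: "W \<subseteq> Cs" for W
  proof -
    have "(\<Sum>Q\<in>Pow Cs. sg W Q * FF Q) = (\<Sum>Q\<in>Pow Cs. \<Sum>S\<in>Pow Es. wt x S * sg (sd W (odd_verts Cs S)) Q)"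
    proof (rule sum.cong)
      fix Q assume Q: "Q \<in> Pow Cs"
      then have fQ: "finite Q" using finCs finite_subset by auto
      show "sg W Q * FF Q = (\<Sum>S\<in>Pow Es. wt x S * sg (sd W (odd_verts Cs S)) Q)"
        using Q by (simp add: FF_expand sum_distrib_left sg_mult[OF fQ, symmetric] mult_ac)
    qed simp
    also have "\<dots> = (\<Sum>S\<in>Pow Es. wt x S * (\<Sum>Q\<in>Pow Cs. sg (sd W (odd_verts Cs S)) Q))"
      by (subst sum.swap) (simp add: sum_distrib_left)
    also have "\<dots> = (\<Sum>S\<in>Pow Es. if odd_verts Cs S = W then 2 ^ card Cs * wt x S else 0)"
    proof (rule sum.cong)
      fix S assume "S \<in> Pow Es"
      have "sd W (odd_verts Cs S) \<subseteq> Cs" using W odd_sub unfolding sd_def by blast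
      moreover have "sd W (odd_verts Cs S) = {} \<longleftrightarrow> odd_verts Cs S = W" unfolding sd_def by blast
      ultimately show "wt x S * (\<Sum>Q\<in>Pow Cs. sg (sd W (odd_verts Cs S)) Q) =
          (if odd_verts Cs S = W then 2 ^ card Cs * wt x S else 0)"
        by (simp add: orth)
    qed simp
    also have "\<dots> = (\<Sum>S\<in>{S \<in> Pow Es. odd_verts Cs S = W}. 2 ^ card Cs * wt x S)"
      by (rule sum.inter_filter[symmetric]) (simp add: finEs)
    also have "\<dots> = 2 ^ card Cs * (\<Sum>S\<in>{S. S \<subseteq> Es \<and> odd_verts Cs S = W}. wt x S)"
      by (simp add: sum_distrib_left)
    finally show ?thesis .
  qed
  show ?thesis
  proof (cases "W \<subseteq> Cs")
    case False
    have E: "{S. S \<subseteq> Es \<and> odd_verts Cs S = W} = {}"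
    proof (rule equals0I)
      fix S assume "S \<in> {S. S \<subseteq> Es \<and> odd_verts Cs S = W}"
      then have "W = odd_verts Cs S" by simp
      then have "W \<subseteq> Cs" using odd_sub[of S] by simp
      then show False using False by simp
    qed
    have "0 \<le> Zk Cs Es x 0" unfolding Zk_def Omega_def
      by (rule sum_nonneg) (use wt_nn in auto)
    then show ?thesis unfolding E by simp
  next
    case True
    have "(\<Sum>Q\<in>Pow Cs. sg W Q * FF Q) \<le> (\<Sum>Q\<in>Pow Cs. sg {} Q * FF Q)"
    proof (rule sum_mono)
      fix Q
      have "sg W Q * FF Q \<le> \<bar>sg W Q\<bar> * FF Q" using FF_nn by (intro mult_right_mono) auto
      then show "sg W Q * FF Q \<le> sg {} Q * FF Q" by (simp add: sg_abs sg_def)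
    qed
    then have "2 ^ card Cs * (\<Sum>S\<in>{S. S \<subseteq> Es \<and> odd_verts Cs S = W}. wt x S)
       \<le> 2 ^ card Cs * (\<Sum>S\<in>{S. S \<subseteq> Es \<and> odd_verts Cs S = {}}. wt x S)"
      using key[OF True] key[of "{}"] by simp
    then show ?thesis using Z0 by simp
  qed
qed

end



lemma sd_mem[simp]: "f \<in> sd A B \<longleftrightarrow> (f \<in> A) \<noteq> (f \<in> B)" unfolding sd_def by auto

lemma toggle_mem: "f \<in> toggle z e \<longleftrightarrow> (if f = e then f \<notin> z else f \<in> z)"
  unfolding toggle_def by auto

lemma toggle_inj: "toggle z e = toggle z f \<Longrightarrow> e = f"
  by (metis toggle_mem)

lemma toggle_neq: "toggle z e \<noteq> z"
  by (metis toggle_mem)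

lemma sd_empty[simp]: "sd a {} = a" by (simp add: set_eq_iff)

lemma sd_insert_toggle: assumes "f \<notin> T" shows "sd a (insert f T) = toggle (sd a T) f"
proof (rule set_eqI)
  fix y show "y \<in> sd a (insert f T) \<longleftrightarrow> y \<in> toggle (sd a T) f"
    using assms by (cases "y = f") (simp_all add: toggle_mem)
qed

lemma trans_set: "set (zip xs (tl xs)) = {(xs!i, xs!Suc i) | i. Suc i < length xs}"
  by (auto simp: set_zip nth_tl)

lemma trans_iff: "(z, z') \<in> transitions xs \<longleftrightarrow> (\<exists>k. Suc k < length xs \<and> z = xs!k \<and> z' = xs!Suc k)"
  unfolding transitions_def trans_set by blast

lemma take_Suc_set:
  assumes "distinct l" "k < length l"
  shows "set (take (Suc k) l) = insert (l!k) (set (take k l))" "l!k \<notin> set (take k l)"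
proof -
  have eq: "take (Suc k) l = take k l @ [l!k]" using assms(2) by (simp add: take_Suc_conv_app_nth)
  then show "set (take (Suc k) l) = insert (l!k) (set (take k l))" by simp
  have "distinct (take (Suc k) l)" using assms(1) by simp
  then show "l!k \<notin> set (take k l)" unfolding eq by simp
qed

context wg begin

lemma edge_ex: assumes "e \<in> Es" "u \<in> e" shows "\<exists>w. w \<in> Cs \<and> w \<noteq> u \<and> e = {u, w}"
proof -
  obtain p q where "p \<in> Cs" "q \<in> Cs" "p \<noteq> q" "e = {p,q}" using edges[OF assms(1)] by blast
  then show ?thesis using assms(2) by auto
qed

lemma odd_remove: assumes "U \<subseteq> Es" "e \<in> U" shows "odd_verts Cs (U - {e}) = sd (odd_verts Cs U) e"
proof -
  have "U - {e} = sd U {e}" using assms(2) by auto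
  moreover have "e \<in> Es" using assms by blast
  ultimately show ?thesis using odd_verts_sd[of U "{e}" Cs] fin_sub[OF assms(1)] odd_single by simp
qed

lemma fin_odd: "finite (odd_verts Cs S)" using finite_subset[OF odd_sub finCs] .

definition good_ord :: "'c set set \<Rightarrow> 'c set list \<Rightarrow> bool" where
  "good_ord U l \<longleftrightarrow> distinct l \<and> set l = U \<and>
     (\<forall>k. card (odd_verts Cs (set (drop k l))) = 0 \<or> card (odd_verts Cs (set (drop k l))) = 2)"

lemma good_ord_ex:
  "U \<subseteq> Es \<Longrightarrow> card (odd_verts Cs U) = 0 \<or> card (odd_verts Cs U) = 2 \<Longrightarrow> \<exists>l. good_ord U l"
proof (induction "card U" arbitrary: U)
  case 0
  then have "U = {}" using fin_sub by simp
  then show ?case by (intro exI[of _ "[]"]) (simp add: good_ord_def odd_verts_def)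
next
  case (Suc n)
  have fU: "finite U" using Suc.prems fin_sub by blast
  have ne: "U \<noteq> {}" using Suc.hyps(2) by auto
  have "\<exists>e\<in>U. card (odd_verts Cs (U - {e})) = 0 \<or> card (odd_verts Cs (U - {e})) = 2"
  proof (cases "odd_verts Cs U = {}")
    case True
    obtain e where e: "e \<in> U" using ne by blast
    then have "e \<in> Es" using Suc.prems by blast
    from edges[OF this] obtain p q where pq: "p \<in> Cs" "q \<in> Cs" "p \<noteq> q" "e = {p,q}" by blast
    have "odd_verts Cs (U - {e}) = sd {} e" using odd_remove[OF Suc.prems(1) e] True by simp
    also have "sd {} e = e" unfolding sd_def by simp
    finally have "odd_verts Cs (U - {e}) = {p,q}" using pq(4) by simp
    moreover have "card {p,q} = 2" using pq(3) by simp
    ultimately show ?thesis using e by (intro bexI[of _ e]) simp_all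
  next
    case False
    then have "card (odd_verts Cs U) = 2" using Suc.prems(2) fin_odd by auto
    then obtain s t where st: "odd_verts Cs U = {s,t}" "s \<noteq> t" by (auto simp: card_2_iff)
    then have "s \<in> odd_verts Cs U" by auto
    then have "odd (card {e \<in> U. s \<in> e})" unfolding odd_verts_def by simp
    then have "{e \<in> U. s \<in> e} \<noteq> {}" by (intro notI) simp
    then obtain e where e: "e \<in> U" "s \<in> e" by blast
    then have "e \<in> Es" using Suc.prems by blast
    then obtain w where w: "w \<in> Cs" "w \<noteq> s" "e = {s,w}" using edge_ex e by blast
    have D: "odd_verts Cs (U - {e}) = sd {s,t} {s,w}" using odd_remove[OF Suc.prems(1) e(1)] st w by simp
    show ?thesis
    proof (cases "w = t")
      case True then have "odd_verts Cs (U - {e}) = {}" using D by auto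
      then show ?thesis using e(1) by (intro bexI[of _ e]) simp_all
    next
      case False then have "odd_verts Cs (U - {e}) = {t,w}" using D st w by auto
      moreover have "card {t,w} = 2" using False by simp
      ultimately show ?thesis using e(1) by (intro bexI[of _ e]) simp_all
    qed
  qed
  then obtain e where e: "e \<in> U"
    and c: "card (odd_verts Cs (U - {e})) = 0 \<or> card (odd_verts Cs (U - {e})) = 2" by blast
  have "n = card (U - {e})" using Suc.hyps(2) e fU by simp
  moreover have "U - {e} \<subseteq> Es" using Suc.prems by blast
  ultimately obtain l where l: "good_ord (U - {e}) l" using Suc.hyps(1) c by blast
  have d: "distinct (e # l)" using l by (simp add: good_ord_def)
  have s: "set (e # l) = U" using l e by (auto simp: good_ord_def)
  have "card (odd_verts Cs (set (drop k (e # l)))) = 0 \<or> card (odd_verts Cs (set (drop k (e # l)))) = 2" for k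
  proof (cases k)
    case 0 then show ?thesis using Suc.prems(2) s by simp
  next
    case (Suc k') then show ?thesis using l by (simp add: good_ord_def)
  qed
  then have "good_ord U (e # l)" using d s unfolding good_ord_def by blast
  then show ?case by blast
qed

definition ord :: "'c set set \<Rightarrow> 'c set list" where
  "ord U = (SOME l. good_ord U l)"

definition gp :: "'c set set \<Rightarrow> 'c set set \<Rightarrow> 'c set set list" where
  "gp a b = map (\<lambda>k. sd a (set (take k (ord (sd a b))))) [0..<Suc (length (ord (sd a b)))]"

abbreviation "Ow \<equiv> Omega_worm Cs Es"
abbreviation "O0 \<equiv> Omega Cs Es 0"
abbreviation "O2 \<equiv> Omega Cs Es 2"

lemma Ow_sub: "S \<in> Ow \<Longrightarrow> S \<subseteq> Es" unfolding Omega_worm_def Omega_def by auto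
lemma Ow_card: "S \<in> Ow \<Longrightarrow> card (odd_verts Cs S) = 0 \<or> card (odd_verts Cs S) = 2"
  unfolding Omega_worm_def Omega_def by auto
lemma O0_odd: "S \<in> O0 \<Longrightarrow> odd_verts Cs S = {}" unfolding Omega_def using fin_odd by auto
lemma O0_Ow: "S \<in> O0 \<Longrightarrow> S \<in> Ow" unfolding Omega_worm_def by auto

lemma sd_sub: "a \<subseteq> Es \<Longrightarrow> b \<subseteq> Es \<Longrightarrow> sd a b \<subseteq> Es" unfolding sd_def by blast

lemma odd_U: assumes "a \<in> Ow" "b \<in> O0" shows "odd_verts Cs (sd a b) = odd_verts Cs a"
  using odd_verts_sd[of a b Cs] fin_sub[OF Ow_sub[OF assms(1)]] fin_sub[OF Ow_sub[OF O0_Ow[OF assms(2)]]]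
    O0_odd[OF assms(2)] by auto

lemma ord_good: assumes "a \<in> Ow" "b \<in> O0" shows "good_ord (sd a b) (ord (sd a b))"
proof -
  have "sd a b \<subseteq> Es" using Ow_sub[OF assms(1)] Ow_sub[OF O0_Ow[OF assms(2)]] by auto
  moreover have "card (odd_verts Cs (sd a b)) = 0 \<or> card (odd_verts Cs (sd a b)) = 2"
    using odd_U[OF assms] Ow_card[OF assms(1)] by simp
  ultimately show ?thesis unfolding ord_def using good_ord_ex by (metis someI_ex)
qed

lemma gp_len: "length (gp a b) = Suc (length (ord (sd a b)))" by (simp add: gp_def del: upt_Suc)

lemma gp_nth: "k \<le> length (ord (sd a b)) \<Longrightarrow> gp a b ! k = sd a (set (take k (ord (sd a b))))"
  by (simp add: gp_def del: upt_Suc)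

lemma gp_trans: "(z, z') \<in> transitions (gp a b) \<longleftrightarrow>
   (\<exists>k < length (ord (sd a b)). z = sd a (set (take k (ord (sd a b)))) \<and>
        z' = sd a (set (take (Suc k) (ord (sd a b)))))" (is "?L \<longleftrightarrow> ?R")
proof -
  have "?L \<longleftrightarrow> (\<exists>k. Suc k < Suc (length (ord (sd a b))) \<and> z = gp a b ! k \<and> z' = gp a b ! Suc k)"
    unfolding trans_iff gp_len ..
  also have "\<dots> \<longleftrightarrow> ?R"
  proof (rule ex_cong1)
    fix k show "(Suc k < Suc (length (ord (sd a b))) \<and> z = gp a b ! k \<and> z' = gp a b ! Suc k) \<longleftrightarrow>
      (k < length (ord (sd a b)) \<and> z = sd a (set (take k (ord (sd a b)))) \<and>
        z' = sd a (set (take (Suc k) (ord (sd a b)))))"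
      by (cases "k < length (ord (sd a b))") (simp_all add: gp_nth)
  qed
  finally show ?thesis .
qed

lemma state_odd:
  assumes "a \<in> Ow" "b \<in> O0"
  shows "odd_verts Cs (sd a (set (take k (ord (sd a b))))) = odd_verts Cs (set (drop k (ord (sd a b))))"
proof -
  let ?l = "ord (sd a b)"
  let ?T = "set (take k ?l)" and ?D = "set (drop k ?l)"
  have g: "good_ord (sd a b) ?l" by (rule ord_good[OF assms])
  have fa: "finite a" using fin_sub[OF Ow_sub[OF assms(1)]] .
  have "sd ?T ?D = sd a b"
  proof -
    have "?T \<union> ?D = set ?l" using arg_cong[OF append_take_drop_id[of k ?l], of set]
      by (simp del: append_take_drop_id)
    moreover have "?T \<inter> ?D = {}" using g unfolding good_ord_def by (simp add: set_take_disj_set_drop_if_distinct)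
    moreover have "sd ?T ?D = ?T \<union> ?D" if "?T \<inter> ?D = {}" using that unfolding sd_def by blast
    ultimately show ?thesis using g unfolding good_ord_def by simp
  qed
  moreover have "odd_verts Cs (sd ?T ?D) = sd (odd_verts Cs ?T) (odd_verts Cs ?D)"
    by (simp add: odd_verts_sd)
  ultimately have "odd_verts Cs (sd a b) = sd (odd_verts Cs ?T) (odd_verts Cs ?D)" by simp
  then have e1: "odd_verts Cs a = sd (odd_verts Cs ?T) (odd_verts Cs ?D)" using odd_U[OF assms] by simp
  have "odd_verts Cs (sd a ?T) = sd (odd_verts Cs a) (odd_verts Cs ?T)" using fa by (simp add: odd_verts_sd)
  also have "\<dots> = odd_verts Cs ?D" unfolding e1 by (rule set_eqI) (simp only: sd_mem, blast)
  finally show ?thesis .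
qed

lemma gp_path: assumes "a \<in> Ow" "b \<in> O0" shows "is_worm_path Cs Es a b (gp a b)"
proof -
  let ?l = "ord (sd a b)"
  have g: "good_ord (sd a b) ?l" by (rule ord_good[OF assms])
  have aE: "a \<subseteq> Es" and bE: "b \<subseteq> Es" using Ow_sub[OF assms(1)] Ow_sub[OF O0_Ow[OF assms(2)]] by auto
  have ne: "gp a b \<noteq> []" using gp_len by (metis Zero_not_Suc list.size(3))
  have hd: "hd (gp a b) = a" using ne by (simp add: hd_conv_nth gp_nth)
  have "last (gp a b) = gp a b ! length ?l" using ne by (simp add: last_conv_nth gp_len)
  also have "\<dots> = sd a (set ?l)" by (simp add: gp_nth)
  also have "\<dots> = b" using g unfolding good_ord_def by auto
  finally have lst: "last (gp a b) = b" .
  have st: "set (gp a b) \<subseteq> Ow"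
  proof
    fix s assume "s \<in> set (gp a b)"
    then obtain k where k: "k < length (gp a b)" "s = gp a b ! k" by (metis in_set_conv_nth)
    then have k': "k \<le> length ?l" by (simp add: gp_len)
    have s: "s = sd a (set (take k ?l))" using k k' by (simp add: gp_nth)
    have "set (take k ?l) \<subseteq> sd a b" using g unfolding good_ord_def by (metis set_take_subset)
    moreover have "sd a b \<subseteq> Es" using aE bE by (rule sd_sub)
    ultimately have T: "set (take k ?l) \<subseteq> Es" by blast
    have "s \<subseteq> a \<union> set (take k ?l)" unfolding s by (auto simp del: sd_mem simp: sd_def)
    then have "s \<subseteq> Es" using aE T by blast
    moreover have "card (odd_verts Cs s) = 0 \<or> card (odd_verts Cs s) = 2"
      using s state_odd[OF assms, of k] g unfolding good_ord_def by simp
    ultimately show "s \<in> Ow" unfolding Omega_worm_def Omega_def by auto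
  qed
  have "\<forall>(s, t)\<in>set (zip (gp a b) (tl (gp a b))). \<exists>e\<in>Es. t = toggle s e"
  proof (intro ballI, clarify)
    fix s t assume "(s, t) \<in> set (zip (gp a b) (tl (gp a b)))"
    then obtain k where k: "k < length ?l" "s = sd a (set (take k ?l))" "t = sd a (set (take (Suc k) ?l))"
      using gp_trans[of s t a b] unfolding transitions_def by blast
    have d: "distinct ?l" using g unfolding good_ord_def by simp
    have "t = toggle s (?l ! k)" using k take_Suc_set[OF d k(1)] by (simp add: sd_insert_toggle)
    moreover have "?l ! k \<in> Es"
    proof -
      have "?l ! k \<in> set ?l" using k(1) by (rule nth_mem)
      then have "?l ! k \<in> sd a b" using g unfolding good_ord_def by simp
      then show ?thesis using sd_sub[OF aE bE] by blast
    qed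
    ultimately show "\<exists>e\<in>Es. t = toggle s e" by blast
  qed
  then show ?thesis unfolding is_worm_path_def using ne hd lst st by blast
qed

lemma gp_len_le: assumes "a \<in> Ow" "b \<in> O0" shows "length (gp a b) - 1 \<le> card Es"
proof -
  let ?l = "ord (sd a b)"
  have g: "good_ord (sd a b) ?l" by (rule ord_good[OF assms])
  have "length ?l = card (sd a b)" using g unfolding good_ord_def by (metis distinct_card)
  also have "\<dots> \<le> card Es" using Ow_sub[OF assms(1)] Ow_sub[OF O0_Ow[OF assms(2)]] finEs
    by (intro card_mono) auto
  finally show ?thesis by (simp add: gp_len)
qed

end



context wg begin

lemma deg_le: "deg Es u \<le> card Cs"
proof -
  have "{f \<in> Es. u \<in> f} \<subseteq> (\<lambda>w. {u, w}) ` Cs"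
  proof
    fix f assume "f \<in> {f \<in> Es. u \<in> f}"
    then have "f \<in> Es" "u \<in> f" by auto
    from edge_ex[OF this] obtain w where "w \<in> Cs" "f = {u,w}" by blast
    then show "f \<in> (\<lambda>w. {u, w}) ` Cs" by blast
  qed
  then have "card {f \<in> Es. u \<in> f} \<le> card ((\<lambda>w. {u, w}) ` Cs)" by (intro card_mono) (simp_all add: finCs)
  also have "\<dots> \<le> card Cs" by (rule card_image_le[OF finCs])
  finally show ?thesis unfolding deg_def .
qed

lemma deg_pos: assumes "e \<in> Es" "u \<in> e" shows "1 \<le> deg Es u"
proof -
  have "e \<in> {f \<in> Es. u \<in> f}" using assms by simp
  moreover have "finite {f \<in> Es. u \<in> f}" using finEs by simp
  ultimately have "card {f \<in> Es. u \<in> f} > 0" using card_gt_0_iff by blast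
  then show ?thesis unfolding deg_def by simp
qed

lemma card_Cs_ge2: assumes "e \<in> Es" shows "2 \<le> card Cs"
proof -
  from edges[OF assms] obtain p q where pq: "p \<in> Cs" "q \<in> Cs" "p \<noteq> q" "e = {p,q}" by blast
  then have "card {p,q} \<le> card Cs" by (intro card_mono[OF finCs]) auto
  then show ?thesis using pq(3) by simp
qed

lemma s_lb: assumes "e \<in> Es" shows "1 / real (card Cs) \<le> (\<Sum>u\<in>e. 1 / real (deg Es u))"
proof -
  from edges[OF assms] obtain p q where pq: "p \<in> Cs" "q \<in> Cs" "p \<noteq> q" "e = {p,q}" by blast
  have "(\<Sum>u\<in>e. 1 / real (deg Es u)) = 1 / real (deg Es p) + 1 / real (deg Es q)"
    using pq by simp
  moreover have "1 \<le> deg Es p" using deg_pos[OF assms] pq by simp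
  moreover have "deg Es p \<le> card Cs" by (rule deg_le)
  ultimately show ?thesis
    by (smt (verit, best) frac_le of_nat_0_le_iff of_nat_1 of_nat_le_iff divide_nonneg_nonneg)
qed

lemma P_move_lb:
  assumes z: "z \<in> Ow" and e: "e \<in> Es" and t: "toggle z e \<in> Ow" and pos: "P_move Cs Es x z e > 0"
  shows "(if e \<notin> z then x e else 1) / (2 * real (card Cs)) \<le> xi Cs Es z * P_move Cs Es x z e"
proof -
  define n where "n = real (card Cs)"
  define ex where "ex = (if e \<notin> z then x e else 1)"
  define s where "s = (\<Sum>u\<in>e. 1 / real (deg Es u))"
  have n2: "2 \<le> n" using card_Cs_ge2[OF e] n_def by simp
  have sl: "1/n \<le> s" using s_lb[OF e] n_def s_def by simp
  have ex0: "0 \<le> ex" and ex1: "ex \<le> 1" using xnn[OF e] xle[OF e] ex_def by auto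
  have key: "ex / (2 * n) \<le> ex * s / 2"
  proof -
    have "ex * (1/n) \<le> ex * s" by (rule mult_left_mono[OF sl ex0])
    then show ?thesis by simp
  qed
  show ?thesis
  proof (cases "z \<in> O0")
    case True
    have P: "P_move Cs Es x z e = ex * (1 / (2 * n)) * s"
      unfolding P_move_def Let_def ex_def s_def n_def using True by simp
    have "xi Cs Es z = n" using True n_def by (simp add: xi_def)
    then have "xi Cs Es z * P_move Cs Es x z e = ex * s / 2" using P n2 by simp
    then show ?thesis using key unfolding ex_def n_def by simp
  next
    case False
    have xi2: "xi Cs Es z = 2" using z False by (simp add: xi_def Omega_worm_def)
    show ?thesis
    proof (cases "toggle z e \<in> O0")
      case True
      have P: "P_move Cs Es x z e = ex * (1 / 4) * s"
        unfolding P_move_def Let_def ex_def s_def using False True by simp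
      then have "xi Cs Es z * P_move Cs Es x z e = ex * s / 2" using xi2 by simp
      then show ?thesis using key unfolding ex_def n_def by simp
    next
      case False2: False
      have z2: "z \<in> O2" using z False unfolding Omega_worm_def by simp
      have t2: "toggle z e \<in> O2" using t False2 unfolding Omega_worm_def by simp
      define u where "u = (THE u. u \<in> e \<and> u \<in> odd_verts Cs z)"
      define v where "v = (THE v. v \<in> e \<and> v \<noteq> u)"
      define du where "du = real (deg Es u)"
      define dv where "dv = real (deg Es v)"
      define r where "r = du / dv"
      define M where "M = (if e \<notin> z then min 1 (r * x e) else (if x e \<le> r then 1 else r / x e))"
      have P: "P_move Cs Es x z e = M * (1 / (4 * du))"
        unfolding P_move_def Let_def using False False2 z2 t2
        by (simp add: u_def[symmetric] v_def[symmetric] du_def dv_def r_def M_def)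
      have du0: "0 < du"
      proof (rule ccontr)
        assume "\<not> 0 < du"
        then have "du = 0" using du_def by simp
        then show False using P pos by simp
      qed
      have dun: "du \<le> n" using deg_le du_def n_def by simp
      have dvn: "dv \<le> n" using deg_le dv_def n_def by simp
      have dv0: "0 \<le> dv" using dv_def by simp
      have r0: "0 \<le> r" using r_def du0 dv0 by simp
      have M0: "M > 0" using P pos du0 by (simp add: zero_less_divide_iff)
      have rn: "du / n \<le> r" if "dv \<noteq> 0"
        unfolding r_def using that dv0 dvn du0 by (intro divide_left_mono) auto
      have dn1: "du / n \<le> 1" using dun n2 by simp
      have M: "ex * (du / n) \<le> M"
      proof (cases "e \<notin> z")
        case True
        then have M': "M = min 1 (r * x e)" and exx: "ex = x e" using M_def ex_def by auto
        have "dv \<noteq> 0"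
        proof
          assume "dv = 0" then have "r = 0" using r_def by simp
          then show False using M' M0 by simp
        qed
        then have "du / n \<le> r" by (rule rn)
        then have a0: "(du / n) * x e \<le> r * x e" by (rule mult_right_mono[OF _ xnn[OF e]])
        then have a: "x e * (du / n) \<le> r * x e" by (simp only: mult.commute)
        have b: "x e * (du / n) \<le> 1" using xle[OF e] xnn[OF e] dn1 du0 n2
          by (metis mult_le_one divide_nonneg_nonneg less_eq_real_def of_nat_0_le_iff n_def)
        show ?thesis using a b M' exx by simp
      next
        case False
        then have exx: "ex = 1" using ex_def by simp
        show ?thesis
        proof (cases "x e \<le> r")
          case True
          then have "M = 1" using False M_def by simp
          then show ?thesis using exx dn1 by simp
        next
          case False3: False
          then have M': "M = r / x e" using False M_def by simp
          have xp: "0 < x e" using False3 r0 by simp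
          have "dv \<noteq> 0"
          proof
            assume "dv = 0" then have "r = 0" using r_def by simp
            then show False using M' M0 by simp
          qed
          then have "du / n \<le> r" by (rule rn)
          moreover have "r \<le> r / x e" using xp xle[OF e] r0
            by (simp add: le_divide_eq mult_left_le)
          ultimately show ?thesis using exx M' by simp
        qed
      qed
      have "xi Cs Es z * P_move Cs Es x z e = M / (2 * du)" using xi2 P by simp
      moreover have "ex / (2 * n) \<le> M / (2 * du)"
      proof -
        have "ex / (2 * n) = ex * (du / n) / (2 * du)" using du0 by simp
        also have "\<dots> \<le> M / (2 * du)" using M du0 by (intro divide_right_mono) auto
        finally show ?thesis .
      qed
      ultimately show ?thesis unfolding ex_def n_def by simp
    qed
  qed
qed

end



lemma wt_pair:
  assumes "finite a" "finite b" "finite Y" "\<forall>f. f \<notin> sd a b \<longrightarrow> (f \<in> Y \<longleftrightarrow> f \<in> a)"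
  shows "wt x a * wt x b = wt x Y * wt x (sd (sd a b) Y)"
proof -
  have u: "Y \<union> sd (sd a b) Y = a \<union> b"
  proof (rule set_eqI)
    fix f show "f \<in> Y \<union> sd (sd a b) Y \<longleftrightarrow> f \<in> a \<union> b"
      using assms(4) by (cases "f \<in> sd a b") (simp_all only: sd_mem Un_iff, blast+)
  qed
  have i: "Y \<inter> sd (sd a b) Y = a \<inter> b"
  proof (rule set_eqI)
    fix f show "f \<in> Y \<inter> sd (sd a b) Y \<longleftrightarrow> f \<in> a \<inter> b"
      using assms(4) by (cases "f \<in> sd a b") (simp_all only: sd_mem Int_iff, blast+)
  qed
  have fe: "finite (sd (sd a b) Y)" using assms unfolding sd_def by simp
  have "wt x a * wt x b = wt x (a \<union> b) * wt x (a \<inter> b)"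
    unfolding wt_def by (rule prod.union_inter[symmetric]) (use assms in auto)
  also have "\<dots> = wt x Y * wt x (sd (sd a b) Y)"
    unfolding wt_def u[symmetric] i[symmetric] by (rule prod.union_inter) (use assms fe in auto)
  finally show ?thesis .
qed

context wg begin

lemma pr_info:
  assumes "a \<in> Ow" "b \<in> O0" "(z, toggle z e) \<in> transitions (gp a b)"
  shows "\<exists>k < length (ord (sd a b)). z = sd a (set (take k (ord (sd a b)))) \<and> ord (sd a b) ! k = e"
proof -
  let ?l = "ord (sd a b)"
  obtain k where k: "k < length ?l" "z = sd a (set (take k ?l))" "toggle z e = sd a (set (take (Suc k) ?l))"
    using assms(3) gp_trans by blast
  have d: "distinct ?l" using ord_good[OF assms(1,2)] unfolding good_ord_def by simp
  have "toggle z e = toggle z (?l ! k)" using k take_Suc_set[OF d k(1)] by (simp add: sd_insert_toggle)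
  then have "?l ! k = e" using toggle_inj by metis
  then show ?thesis using k by blast
qed

lemma fin_Ow: "finite Ow"
proof -
  have "Ow \<subseteq> Pow Es" using Ow_sub by blast
  then show ?thesis using finEs finite_subset by blast
qed

lemma Z0_ge1: "1 \<le> Zk Cs Es x 0"
proof -
  have e: "{} \<in> O0" unfolding Omega_def odd_verts_def by simp
  have "O0 \<subseteq> Ow" using O0_Ow by blast
  then have f: "finite O0" using fin_Ow by (rule finite_subset)
  have "\<And>S. S \<in> O0 - {{}} \<Longrightarrow> 0 \<le> wt x S" using wt_nn Ow_sub O0_Ow by blast
  then have "wt x {} \<le> Zk Cs Es x 0" unfolding Zk_def
    by (rule member_le_sum[OF e _ f])
  then show ?thesis by (simp add: wt_def)
qed

lemma Z_nn: "0 \<le> Zk Cs Es x k"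
  unfolding Zk_def Omega_def by (rule sum_nonneg) (use wt_nn in auto)

lemma PP_card: assumes "Cs \<noteq> {}"
  shows "card {P. P \<subseteq> Cs \<and> (card P = 0 \<or> card P = 2)} \<le> card Cs * card Cs"
proof -
  let ?f = "\<lambda>(u, v). if u = v then {} else {u, v}"
  have "{P. P \<subseteq> Cs \<and> (card P = 0 \<or> card P = 2)} \<subseteq> ?f ` (Cs \<times> Cs)"
  proof
    fix P assume "P \<in> {P. P \<subseteq> Cs \<and> (card P = 0 \<or> card P = 2)}"
    then have P: "P \<subseteq> Cs" "card P = 0 \<or> card P = 2" by auto
    show "P \<in> ?f ` (Cs \<times> Cs)"
    proof (cases "card P = 0")
      case True
      then have "P = {}" using P(1) finCs finite_subset by (metis card_0_eq)
      moreover obtain c where "c \<in> Cs" using assms by blast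
      ultimately show ?thesis by (intro image_eqI[of _ _ "(c, c)"]) auto
    next
      case False
      then obtain u v where "P = {u, v}" "u \<noteq> v" using P(2) by (meson card_2_iff)
      then show ?thesis using P(1) by (intro image_eqI[of _ _ "(u, v)"]) auto
    qed
  qed
  then have "card {P. P \<subseteq> Cs \<and> (card P = 0 \<or> card P = 2)} \<le> card (?f ` (Cs \<times> Cs))"
    by (intro card_mono) (simp_all add: finCs)
  also have "\<dots> \<le> card (Cs \<times> Cs)" by (rule card_image_le) (simp add: finCs)
  finally show ?thesis by (simp add: card_cartesian_product)
qed

lemma pr_bound:
  assumes z: "z \<in> Ow" and e: "e \<in> Es"
  shows "(\<Sum>(a, b)\<in>{(a, b). a \<in> Ow \<and> b \<in> O0 \<and> (z, toggle z e) \<in> transitions (gp a b)}.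
            xi Cs Es a * wt x a * wt x b)
         \<le> real (card Cs) ^ 3 * (if e \<notin> z then x e else 1) * wt x z * Zk Cs Es x 0"
proof -
  define Pr where "Pr = {(a, b). a \<in> Ow \<and> b \<in> O0 \<and> (z, toggle z e) \<in> transitions (gp a b)}"
  define n where "n = real (card Cs)"
  define ex where "ex = (if e \<notin> z then x e else 1)"
  define zhi where "zhi = insert e z"
  define eta where "eta = (\<lambda>(a::'c set set, b::'c set set). sd (sd a b) zhi)"
  define PP where "PP = {P. P \<subseteq> Cs \<and> (card P = 0 \<or> card P = 2)}"
  define Ws where "Ws = (\<lambda>P. sd P (odd_verts Cs zhi)) ` PP"
  define SS where "SS = {S. S \<subseteq> Es \<and> odd_verts Cs S \<in> Ws}"
  define Z0 where "Z0 = Zk Cs Es x 0"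
  have n2: "2 \<le> n" using card_Cs_ge2[OF e] n_def by simp
  have zE: "z \<subseteq> Es" using Ow_sub[OF z] .
  have fz: "finite z" using fin_sub[OF zE] .
  have zhiE: "zhi \<subseteq> Es" using zE e zhi_def by blast
  have fzhi: "finite zhi" using fin_sub[OF zhiE] .
  have wz: "wt x zhi = ex * wt x z"
  proof (cases "e \<in> z")
    case True then show ?thesis unfolding zhi_def ex_def by (simp add: insert_absorb)
  next
    case False then show ?thesis unfolding zhi_def ex_def wt_def using fz by simp
  qed
  have wz0: "0 \<le> wt x z" using wt_nn[OF zE] .
  have ex0: "0 \<le> ex" using xnn[OF e] ex_def by simp
  have finPr: "finite Pr"
  proof -
    have "Pr \<subseteq> Ow \<times> Ow" unfolding Pr_def using O0_Ow by auto
    then show ?thesis using fin_Ow finite_subset by blast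
  qed
  have mem: "a \<in> Ow \<and> b \<in> O0 \<and> (\<exists>k < length (ord (sd a b)). z = sd a (set (take k (ord (sd a b)))) \<and> ord (sd a b) ! k = e)"
    if "(a, b) \<in> Pr" for a b
    using that pr_info unfolding Pr_def by blast
  have agree: "\<forall>f. f \<notin> sd a b \<longrightarrow> (f \<in> zhi \<longleftrightarrow> f \<in> a)" if ab: "(a, b) \<in> Pr" for a b
  proof -
    obtain k where k: "k < length (ord (sd a b))" "z = sd a (set (take k (ord (sd a b))))"
      "ord (sd a b) ! k = e" "a \<in> Ow" "b \<in> O0" using mem[OF ab] by blast
    have g: "good_ord (sd a b) (ord (sd a b))" using ord_good k(4,5) by blast
    have T: "set (take k (ord (sd a b))) \<subseteq> sd a b" using g unfolding good_ord_def by (metis set_take_subset)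
    have eU: "e \<in> sd a b" using g k(1,3) unfolding good_ord_def by (metis nth_mem)
    show ?thesis
    proof (intro allI impI)
      fix f assume "f \<notin> sd a b"
      then have "f \<notin> set (take k (ord (sd a b)))" "f \<noteq> e" using T eU by auto
      then show "f \<in> zhi \<longleftrightarrow> f \<in> a" unfolding zhi_def k(2) by simp
    qed
  qed
  have wpair: "wt x a * wt x b = ex * wt x z * wt x (eta (a, b))" if ab: "(a, b) \<in> Pr" for a b
  proof -
    have "a \<in> Ow" "b \<in> O0" using mem[OF ab] by auto
    then have "finite a" "finite b" using fin_sub Ow_sub O0_Ow by blast+
    then have "wt x a * wt x b = wt x zhi * wt x (sd (sd a b) zhi)"
      using wt_pair[OF _ _ fzhi agree[OF ab]] by blast
    then show ?thesis unfolding eta_def wz by simp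
  qed
  have inj: "inj_on eta Pr"
  proof (rule inj_onI)
    fix p1 p2 assume p1: "p1 \<in> Pr" and p2: "p2 \<in> Pr" and eq: "eta p1 = eta p2"
    obtain a1 b1 where ab1: "p1 = (a1, b1)" by (cases p1)
    obtain a2 b2 where ab2: "p2 = (a2, b2)" by (cases p2)
    have E: "sd (sd a1 b1) zhi = sd (sd a2 b2) zhi" using eq ab1 ab2 eta_def by simp
    have U: "sd a1 b1 = sd a2 b2"
    proof (rule set_eqI)
      fix f
      have "f \<in> sd (sd a1 b1) zhi \<longleftrightarrow> f \<in> sd (sd a2 b2) zhi" using E by simp
      then show "f \<in> sd a1 b1 \<longleftrightarrow> f \<in> sd a2 b2" by (simp only: sd_mem) blast
    qed
    obtain k1 where k1: "k1 < length (ord (sd a1 b1))" "z = sd a1 (set (take k1 (ord (sd a1 b1))))"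
      "ord (sd a1 b1) ! k1 = e" "a1 \<in> Ow" "b1 \<in> O0" using mem[OF p1[unfolded ab1]] by blast
    obtain k2 where k2': "k2 < length (ord (sd a2 b2))" "z = sd a2 (set (take k2 (ord (sd a2 b2))))"
      "ord (sd a2 b2) ! k2 = e" using mem[OF p2[unfolded ab2]] by blast
    have k2: "k2 < length (ord (sd a1 b1))" "z = sd a2 (set (take k2 (ord (sd a1 b1))))"
      "ord (sd a1 b1) ! k2 = e" using k2' unfolding U by auto
    have d: "distinct (ord (sd a1 b1))" using ord_good[OF k1(4,5)] unfolding good_ord_def by simp
    have "k1 = k2" using nth_eq_iff_index_eq[OF d k1(1) k2(1)] k1(3) k2(3) by simp
    then have E2: "sd a1 (set (take k1 (ord (sd a1 b1)))) = sd a2 (set (take k1 (ord (sd a1 b1))))"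
      using k1(2) k2(2) by simp
    have a: "a1 = a2"
    proof (rule set_eqI)
      fix f
      have "f \<in> sd a1 (set (take k1 (ord (sd a1 b1)))) \<longleftrightarrow> f \<in> sd a2 (set (take k1 (ord (sd a1 b1))))"
        using E2 by simp
      then show "f \<in> a1 \<longleftrightarrow> f \<in> a2" by (simp only: sd_mem) blast
    qed
    have "b1 = b2"
    proof (rule set_eqI)
      fix f
      have "f \<in> sd a1 b1 \<longleftrightarrow> f \<in> sd a2 b2" using U by simp
      then show "f \<in> b1 \<longleftrightarrow> f \<in> b2" using a by (simp only: sd_mem) blast
    qed
    then show "p1 = p2" using a ab1 ab2 by simp
  qed
  have img: "eta ` Pr \<subseteq> SS"
  proof
    fix S assume "S \<in> eta ` Pr"
    then obtain a b where ab: "(a, b) \<in> Pr" "S = sd (sd a b) zhi" unfolding eta_def by auto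
    have a: "a \<in> Ow" and b: "b \<in> O0" using mem[OF ab(1)] by auto
    have aE: "a \<subseteq> Es" and bE: "b \<subseteq> Es" using Ow_sub[OF a] Ow_sub[OF O0_Ow[OF b]] by auto
    have UE: "sd a b \<subseteq> Es" using sd_sub[OF aE bE] .
    have SE: "S \<subseteq> Es" using ab(2) sd_sub[OF UE zhiE] by simp
    have "odd_verts Cs S = sd (odd_verts Cs (sd a b)) (odd_verts Cs zhi)"
      using ab(2) odd_verts_sd fin_sub[OF UE] fzhi by simp
    also have "\<dots> = sd (odd_verts Cs a) (odd_verts Cs zhi)" using odd_U[OF a b] by simp
    finally have "odd_verts Cs S \<in> Ws" unfolding Ws_def PP_def using odd_sub Ow_card[OF a] by blast
    then show "S \<in> SS" unfolding SS_def using SE by simp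
  qed
  have finSS: "finite SS"
  proof -
    have "SS \<subseteq> Pow Es" unfolding SS_def by auto
    then show ?thesis using finEs finite_subset by blast
  qed
  have finPP: "finite PP" unfolding PP_def using finCs by simp
  have finWs: "finite Ws" unfolding Ws_def using finPP by simp
  have cardWs: "real (card Ws) \<le> n * n"
  proof -
    have "card Ws \<le> card PP" unfolding Ws_def using finPP by (rule card_image_le)
    also have "\<dots> \<le> card Cs * card Cs" unfolding PP_def using PP_card card_Cs_ge2[OF e] by fastforce
    finally show ?thesis unfolding n_def by (metis of_nat_le_iff of_nat_mult)
  qed
  have sumSS: "(\<Sum>S\<in>SS. wt x S) \<le> n * n * Z0"
  proof -
    have "(\<Sum>S\<in>SS. wt x S) = (\<Sum>W\<in>Ws. \<Sum>S\<in>{S \<in> SS. odd_verts Cs S = W}. wt x S)"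
      by (rule sum.group[symmetric]) (use finSS finWs SS_def in auto)
    also have "\<dots> \<le> (\<Sum>W\<in>Ws. Z0)"
    proof (rule sum_mono)
      fix W assume W: "W \<in> Ws"
      have "{S \<in> SS. odd_verts Cs S = W} = {S. S \<subseteq> Es \<and> odd_verts Cs S = W}"
        unfolding SS_def using W by auto
      then show "(\<Sum>S\<in>{S \<in> SS. odd_verts Cs S = W}. wt x S) \<le> Z0" unfolding Z0_def using ZW_le by simp
    qed
    also have "\<dots> = real (card Ws) * Z0" by simp
    also have "\<dots> \<le> n * n * Z0" using cardWs Z_nn Z0_def by (intro mult_right_mono) auto
    finally show ?thesis .
  qed
  have "(\<Sum>(a, b)\<in>Pr. xi Cs Es a * wt x a * wt x b) \<le> (\<Sum>p\<in>Pr. n * (ex * wt x z * wt x (eta p)))"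
  proof (rule sum_mono)
    fix p assume p: "p \<in> Pr"
    obtain a b where ab: "p = (a, b)" by (cases p)
    have a: "a \<in> Ow" and b: "b \<in> O0" using mem p ab by auto
    have xia: "xi Cs Es a \<le> n" using a n2 unfolding xi_def n_def Omega_worm_def by auto
    have nn: "0 \<le> wt x a * wt x b" using wt_nn Ow_sub[OF a] Ow_sub[OF O0_Ow[OF b]] by simp
    have "xi Cs Es a * wt x a * wt x b \<le> n * (wt x a * wt x b)"
      using mult_right_mono[OF xia nn] by (simp add: mult.assoc)
    then show "(case p of (a, b) \<Rightarrow> xi Cs Es a * wt x a * wt x b) \<le> n * (ex * wt x z * wt x (eta p))"
      using wpair[OF p[unfolded ab]] ab by simp
  qed
  also have "\<dots> = n * ex * wt x z * (\<Sum>p\<in>Pr. wt x (eta p))"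
    by (simp add: sum_distrib_left mult.assoc)
  also have "\<dots> \<le> n * ex * wt x z * (n * n * Z0)"
  proof (rule mult_left_mono)
    have "(\<Sum>p\<in>Pr. wt x (eta p)) = (\<Sum>S\<in>eta ` Pr. wt x S)"
      using sum.reindex[OF inj, of "wt x"] by simp
    also have "\<dots> \<le> (\<Sum>S\<in>SS. wt x S)"
      by (rule sum_mono2[OF finSS img]) (use SS_def wt_nn in auto)
    finally show "(\<Sum>p\<in>Pr. wt x (eta p)) \<le> n * n * Z0" using sumSS by linarith
    show "0 \<le> n * ex * wt x z" using n2 ex0 wz0 by simp
  qed
  also have "\<dots> = n ^ 3 * ex * wt x z * Z0" by (simp add: power3_eq_cube mult_ac)
  finally have "(\<Sum>(a, b)\<in>Pr. xi Cs Es a * wt x a * wt x b) \<le> n ^ 3 * ex * wt x z * Z0" .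
  then show ?thesis unfolding Pr_def n_def ex_def Z0_def .
qed

end



context wg begin

lemma Pw_move:
  assumes "z \<noteq> z'" "0 < P_worm Cs Es x z z'"
  shows "\<exists>e\<in>Es. z' = toggle z e \<and> P_worm Cs Es x z z' = P_move Cs Es x z e"
proof -
  have P: "P_worm Cs Es x z z' = P_off Cs Es x z z'" using assms(1) unfolding P_worm_def by simp
  have "\<exists>e\<in>Es. z' = toggle z e"
  proof (rule ccontr)
    assume "\<not> ?thesis"
    then have "P_off Cs Es x z z' = 0" unfolding P_off_def by auto
    then show False using P assms(2) by simp
  qed
  then obtain e where e: "e \<in> Es" "z' = toggle z e" by blast
  have th: "(THE e. e \<in> Es \<and> z' = toggle z e) = e"
    by (rule the_equality) (use e toggle_inj in auto)
  have "P_off Cs Es x z z' = P_move Cs Es x z e" unfolding P_off_def using assms(1) e th by auto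
  then show ?thesis using P e by auto
qed

lemma gp_no_loop: assumes "a \<in> Ow" "b \<in> O0" shows "(z, z) \<notin> transitions (gp a b)"
proof
  assume "(z, z) \<in> transitions (gp a b)"
  then obtain k where k: "k < length (ord (sd a b))" "z = sd a (set (take k (ord (sd a b))))"
    "z = sd a (set (take (Suc k) (ord (sd a b))))" using gp_trans by blast
  have d: "distinct (ord (sd a b))" using ord_good[OF assms] unfolding good_ord_def by simp
  have "z = toggle z (ord (sd a b) ! k)" using k take_Suc_set[OF d k(1)] by (simp add: sd_insert_toggle)
  then show False using toggle_neq by metis
qed

lemma term_bound:
  assumes z: "z \<in> Ow" and z': "z' \<in> Ow" and pos: "0 < P_worm Cs Es x z z'"
    and L0: "0 \<le> L" and LN: "L \<le> real (card Es)"
  shows "L / (pi_set Cs Es x O0 * pi_worm Cs Es x z * P_worm Cs Es x z z') *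
     (\<Sum>(a, b)\<in>{(a, b). a \<in> Ow \<and> b \<in> O0 \<and> (z, z') \<in> transitions (gp a b)}.
        pi_worm Cs Es x a * pi_worm Cs Es x b)
     \<le> real (card Cs) ^ 5 * real (card Es)"
proof (cases "z = z'")
  case True
  have E: "{(a, b). a \<in> Ow \<and> b \<in> O0 \<and> (z, z') \<in> transitions (gp a b)} = {}"
    using gp_no_loop True by blast
  show ?thesis unfolding E by simp
next
  case False
  obtain e where e: "e \<in> Es" "z' = toggle z e" "P_worm Cs Es x z z' = P_move Cs Es x z e"
    using Pw_move[OF False pos] by blast
  define n where "n = real (card Cs)"
  define N where "N = real (card Es)"
  define Z0 where "Z0 = Zk Cs Es x 0"
  define Z2 where "Z2 = Zk Cs Es x 2"
  define Zt where "Zt = n * Z0 + 2 * Z2"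
  define ex where "ex = (if e \<notin> z then x e else 1)"
  define P where "P = P_worm Cs Es x z z'"
  define Pr where "Pr = {(a, b). a \<in> Ow \<and> b \<in> O0 \<and> (z, z') \<in> transitions (gp a b)}"
  define S' where "S' = (\<Sum>(a, b)\<in>Pr. xi Cs Es a * wt x a * wt x b)"
  have n2: "2 \<le> n" using card_Cs_ge2[OF e(1)] n_def by simp
  have Z01: "1 \<le> Z0" using Z0_ge1 Z0_def by simp
  have Z20: "0 \<le> Z2" using Z_nn Z2_def by simp
  have Zt0: "0 < Zt" unfolding Zt_def using n2 Z01 Z20
    by (smt (verit) mult_le_cancel_left1)
  have piw: "pi_worm Cs Es x S = xi Cs Es S * wt x S / Zt" for S
    unfolding pi_worm_def Zt_def Z0_def Z2_def n_def ..
  have pis: "pi_set Cs Es x O0 = n * Z0 / Zt"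
  proof -
    have "pi_set Cs Es x O0 = (\<Sum>S\<in>O0. n / Zt * wt x S)"
      unfolding pi_set_def
      by (rule sum.cong) (simp_all add: piw xi_def n_def)
    also have "\<dots> = n / Zt * Z0" unfolding Z0_def Zk_def by (simp add: sum_distrib_left)
    finally show ?thesis by simp
  qed
  have sumeq: "(\<Sum>(a, b)\<in>Pr. pi_worm Cs Es x a * pi_worm Cs Es x b) = n / Zt ^ 2 * S'"
  proof -
    have "(\<Sum>(a, b)\<in>Pr. pi_worm Cs Es x a * pi_worm Cs Es x b) =
          (\<Sum>(a, b)\<in>Pr. n / Zt ^ 2 * (xi Cs Es a * wt x a * wt x b))"
    proof (rule sum.cong[OF refl])
      fix p assume p: "p \<in> Pr"
      obtain a b where ab: "p = (a, b)" by (cases p)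
      have "b \<in> O0" using p ab Pr_def by simp
      then have "xi Cs Es b = n" by (simp add: xi_def n_def)
      then show "(case p of (a, b) \<Rightarrow> pi_worm Cs Es x a * pi_worm Cs Es x b) =
          (case p of (a, b) \<Rightarrow> n / Zt ^ 2 * (xi Cs Es a * wt x a * wt x b))"
        using ab by (simp add: piw power2_eq_square)
    qed
    also have "\<dots> = n / Zt ^ 2 * S'" unfolding S'_def
      by (simp add: sum_distrib_left case_prod_unfold)
    finally show ?thesis .
  qed
  have Sb: "S' \<le> n ^ 3 * ex * wt x z * Z0"
    using pr_bound[OF z e(1)] unfolding S'_def Pr_def n_def ex_def Z0_def e(2) .
  have Pp: "0 < P" using pos P_def by simp
  have lb: "ex / (2 * n) \<le> xi Cs Es z * P"
    using P_move_lb[OF z e(1) _ ] z' pos e unfolding P_def n_def ex_def by simp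
  have wz0: "0 \<le> wt x z" using wt_nn Ow_sub[OF z] by simp
  have xiz: "0 < xi Cs Es z" using z n2 unfolding xi_def n_def Omega_worm_def by auto
  have S'0: "0 \<le> S'" unfolding S'_def
  proof (rule sum_nonneg)
    fix p assume p: "p \<in> Pr"
    obtain a b where ab: "p = (a, b)" by (cases p)
    have a: "a \<in> Ow" and b: "b \<in> O0" using p ab Pr_def by auto
    have "0 \<le> xi Cs Es a" unfolding xi_def by simp
    moreover have "0 \<le> wt x a" "0 \<le> wt x b" using wt_nn Ow_sub[OF a] Ow_sub[OF O0_Ow[OF b]] by auto
    ultimately show "0 \<le> (case p of (a, b) \<Rightarrow> xi Cs Es a * wt x a * wt x b)" using ab by simp
  qed
  show ?thesis
  proof (cases "wt x z = 0")
    case True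
    then have "pi_worm Cs Es x z = 0" by (simp add: piw)
    then show ?thesis by simp
  next
    case False
    then have wzp: "0 < wt x z" using wz0 by simp
    define D where "D = pi_set Cs Es x O0 * pi_worm Cs Es x z * P"
    have D: "D = n / Zt ^ 2 * (Z0 * xi Cs Es z * wt x z * P)"
      unfolding D_def pis piw by (simp add: power2_eq_square field_simps)
    have Dp: "0 < D" unfolding D using n2 Zt0 Z01 xiz wzp Pp by simp
    have ex2: "ex \<le> 2 * n * (xi Cs Es z * P)" using lb n2 by (simp add: divide_le_eq mult.commute)
    have "S' \<le> n ^ 3 * (2 * n * (xi Cs Es z * P)) * wt x z * Z0"
    proof -
      have "n ^ 3 * ex * wt x z * Z0 = (n ^ 3 * wt x z * Z0) * ex" by (simp add: mult_ac)
      also have "\<dots> \<le> (n ^ 3 * wt x z * Z0) * (2 * n * (xi Cs Es z * P))"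
        using ex2 n2 wz0 Z01 by (intro mult_left_mono) auto
      finally show ?thesis using Sb by (simp add: mult_ac)
    qed
    also have "\<dots> = 2 * n ^ 4 * (Z0 * xi Cs Es z * wt x z * P)" by (simp add: power_eq_if mult_ac)
    also have "\<dots> \<le> n ^ 5 * (Z0 * xi Cs Es z * wt x z * P)"
    proof (rule mult_right_mono)
      have "2 * n ^ 4 \<le> n * n ^ 4" using n2 by (intro mult_right_mono) auto
      then show "2 * n ^ 4 \<le> n ^ 5" by (simp add: power_eq_if)
      show "0 \<le> Z0 * xi Cs Es z * wt x z * P" using Z01 xiz wz0 Pp by simp
    qed
    finally have S5: "S' \<le> n ^ 5 * (Z0 * xi Cs Es z * wt x z * P)" .
    have C: "n / Zt ^ 2 * S' \<le> n ^ 5 * D"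
    proof -
      have "n / Zt ^ 2 * S' \<le> n / Zt ^ 2 * (n ^ 5 * (Z0 * xi Cs Es z * wt x z * P))"
        using S5 n2 Zt0 by (intro mult_left_mono) auto
      then show ?thesis unfolding D by (simp add: mult_ac)
    qed
    have "L / D * (n / Zt ^ 2 * S') = L * ((n / Zt ^ 2 * S') / D)" by simp
    also have "\<dots> \<le> L * n ^ 5"
    proof (rule mult_left_mono[OF _ L0])
      show "(n / Zt ^ 2 * S') / D \<le> n ^ 5" using C by (simp only: pos_divide_le_eq[OF Dp])
    qed
    also have "\<dots> \<le> N * n ^ 5" using LN n2 unfolding N_def by (intro mult_right_mono) auto
    finally have "L / D * (n / Zt ^ 2 * S') \<le> n ^ 5 * N" by (simp add: mult.commute)
    then show ?thesis unfolding D_def P_def sumeq[unfolded Pr_def] n_def N_def .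
  qed
qed

end



context wg begin

lemma empty_O0: "{} \<in> O0" unfolding Omega_def odd_verts_def by simp

lemma TS_ne: "{(z, z'). z \<in> Ow \<and> z' \<in> Ow \<and> P_worm Cs Es x z z' > 0} \<noteq> {}"
proof (cases "Es = {}")
  case True
  have Ow: "Ow = {{}}"
  proof (rule set_eqI)
    fix S show "S \<in> Ow \<longleftrightarrow> S \<in> {{}}"
    proof
      assume "S \<in> Ow" then have "S \<subseteq> Es" by (rule Ow_sub)
      then show "S \<in> {{}}" using True by simp
    next
      assume "S \<in> {{}}" then show "S \<in> Ow" using O0_Ow[OF empty_O0] by simp
    qed
  qed
  have "P_worm Cs Es x {} {} = 1" unfolding P_worm_def Ow by simp
  then show ?thesis using Ow by auto
next
  case False
  then obtain e where e: "e \<in> Es" by blast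
  from edges[OF e] obtain p q where pq: "p \<in> Cs" "q \<in> Cs" "p \<noteq> q" "e = {p,q}" by blast
  have c2: "card (odd_verts Cs {e}) = 2" using odd_single[OF e] pq by simp
  have eO2: "{e} \<in> O2" unfolding Omega_def using e c2 by simp
  have eOw: "{e} \<in> Ow" using eO2 unfolding Omega_worm_def by simp
  have eN0: "{e} \<notin> O0" using c2 unfolding Omega_def by simp
  have tg: "toggle {e} e = {}" unfolding toggle_def by simp
  have th: "(THE f. f \<in> Es \<and> {} = toggle {e} f) = e"
  proof (rule the_equality)
    show "e \<in> Es \<and> {} = toggle {e} e" using e tg by simp
    fix f assume "f \<in> Es \<and> {} = toggle {e} f"
    then have "toggle {e} f = toggle {e} e" using tg by simp
    then show "f = e" by (rule toggle_inj)
  qed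
  have "P_off Cs Es x {e} {} = P_move Cs Es x {e} e"
    unfolding P_off_def using e tg th by auto
  also have "\<dots> = 1 * (1 / 4) * (\<Sum>u\<in>e. 1 / real (deg Es u))"
    unfolding P_move_def Let_def using eN0 tg empty_O0 by simp
  also have "\<dots> > 0"
  proof -
    have "0 < 1 / real (card Cs)" using card_Cs_ge2[OF e] by simp
    then have "0 < (\<Sum>u\<in>e. 1 / real (deg Es u))" using s_lb[OF e] by linarith
    then show ?thesis by simp
  qed
  finally have "P_worm Cs Es x {e} {} > 0" unfolding P_worm_def by simp
  then show ?thesis using eOw O0_Ow[OF empty_O0] by auto
qed

theorem cong_main:
  "(\<forall>a\<in>Ow. \<forall>b\<in>O0. is_worm_path Cs Es a b (gp a b)) \<and>
   congestion Cs Es x O0 gp \<le> real (card Cs) ^ 5 * real (card Es)"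
proof
  show "\<forall>a\<in>Ow. \<forall>b\<in>O0. is_worm_path Cs Es a b (gp a b)" using gp_path by blast
  define L where "L = real (Max {length (gp a b) - 1 | a b. a \<in> Ow \<and> b \<in> O0})"
  have eqL: "{length (gp a b) - 1 | a b. a \<in> Ow \<and> b \<in> O0} = (\<lambda>(a, b). length (gp a b) - 1) ` (Ow \<times> O0)"
    by auto
  have "O0 \<subseteq> Ow" using O0_Ow by blast
  then have fO0: "finite O0" using fin_Ow by (rule finite_subset)
  have fL: "finite {length (gp a b) - 1 | a b. a \<in> Ow \<and> b \<in> O0}"
    unfolding eqL using fin_Ow fO0 by simp
  have neL: "{length (gp a b) - 1 | a b. a \<in> Ow \<and> b \<in> O0} \<noteq> {}"
    unfolding eqL using empty_O0 O0_Ow[OF empty_O0] by blast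
  have L0: "0 \<le> L" unfolding L_def by simp
  have "Max {length (gp a b) - 1 | a b. a \<in> Ow \<and> b \<in> O0} \<le> card Es"
  proof (subst Max_le_iff[OF fL neL])
    show "\<forall>y\<in>{length (gp a b) - 1 | a b. a \<in> Ow \<and> b \<in> O0}. y \<le> card Es"
      unfolding eqL using gp_len_le by auto
  qed
  then have LN: "L \<le> real (card Es)" unfolding L_def by simp
  define TS where "TS = {(z, z'). z \<in> Ow \<and> z' \<in> Ow \<and> P_worm Cs Es x z z' > 0}"
  define F where "F = (\<lambda>(z, z'). L / (pi_set Cs Es x O0 * pi_worm Cs Es x z * P_worm Cs Es x z z') *
              (\<Sum>(a, b)\<in>{(a, b). a \<in> Ow \<and> b \<in> O0 \<and> (z, z') \<in> transitions (gp a b)}.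
                  pi_worm Cs Es x a * pi_worm Cs Es x b))"
  have cg: "congestion Cs Es x O0 gp = Max (F ` TS)"
    unfolding congestion_def Let_def L_def F_def TS_def by simp
  have fTS: "finite TS"
  proof -
    have "TS \<subseteq> Ow \<times> Ow" unfolding TS_def by auto
    then show ?thesis using fin_Ow finite_subset by blast
  qed
  have neTS: "TS \<noteq> {}" using TS_ne unfolding TS_def .
  have "Max (F ` TS) \<le> real (card Cs) ^ 5 * real (card Es)"
  proof (subst Max_le_iff)
    show "finite (F ` TS)" using fTS by simp
    show "F ` TS \<noteq> {}" using neTS by simp
    show "\<forall>a\<in>F ` TS. a \<le> real (card Cs) ^ 5 * real (card Es)"
    proof
      fix y assume "y \<in> F ` TS"
      then obtain z z' where zz: "(z, z') \<in> TS" "y = F (z, z')" by auto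
      then have "z \<in> Ow" "z' \<in> Ow" "0 < P_worm Cs Es x z z'" unfolding TS_def by auto
      from term_bound[OF this L0 LN] show "y \<le> real (card Cs) ^ 5 * real (card Es)"
        using zz(2) unfolding F_def by simp
    qed
  qed
  then show "congestion Cs Es x O0 gp \<le> real (card Cs) ^ 5 * real (card Es)" using cg by simp
qed

end



lemma partner_HE: "h \<in> HE V \<Longrightarrow> partner h \<in> HE V"
  unfolding HE_def partner_def by auto

lemma circ_HE:
  assumes L: "labelled_4reg V opp" and C: "C \<in> circuits V opp"
  shows "C \<subseteq> HE V"
proof -
  obtain h0 where h0: "h0 \<in> HE V" "C = (circ_step V opp)\<^sup>* `` {h0}"
    using C unfolding circuits_def by blast
  have opp: "\<And>h. h \<in> HE V \<Longrightarrow> opp h \<in> HE V" using L unfolding labelled_4reg_def by blast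
  show ?thesis
  proof
    fix y assume "y \<in> C"
    then have "(h0, y) \<in> (circ_step V opp)\<^sup>*" using h0 by simp
    then show "y \<in> HE V"
    proof (induction rule: rtrancl_induct)
      case base then show ?case using h0 by simp
    next
      case (step y z)
      then show ?case unfolding circ_step_def using opp partner_HE by auto
    qed
  qed
qed

lemma fstar_nz: "fstar \<beta> a b c d \<noteq> 0 \<Longrightarrow> a \<noteq> d \<and> b \<noteq> c"
  unfolding fstar_def by (cases a; cases b; cases c; cases d) auto

lemma valid_partner:
  assumes "valid_sigma V opp \<beta> \<sigma>" "h \<in> HE V"
  shows "\<sigma> (partner h) = (\<not> \<sigma> h)"
proof -
  obtain v k where hk: "h = (v, k)" "v \<in> V" "k \<in> {1..4}" using assms(2) unfolding HE_def by auto
  have "vweight \<beta> \<sigma> v \<noteq> 0" using assms(1) hk(2) unfolding valid_sigma_def by blast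
  then have d: "\<sigma> (v,1) \<noteq> \<sigma> (v,4)" "\<sigma> (v,2) \<noteq> \<sigma> (v,3)" using fstar_nz unfolding vweight_def by blast+
  have "k = 1 \<or> k = 2 \<or> k = 3 \<or> k = 4" using hk(3) by auto
  then show ?thesis using d hk(1) unfolding partner_def by auto
qed

lemma valid_opp:
  assumes "valid_sigma V opp \<beta> \<sigma>" "h \<in> HE V"
  shows "\<sigma> (opp h) = (\<not> \<sigma> h)"
  using assms unfolding valid_sigma_def by blast

lemma xw_props:
  fixes V :: "'v set" and opp :: "'v \<times> nat \<Rightarrow> 'v \<times> nat" and \<beta> :: real
    and h h' :: "('v \<times> nat) set \<Rightarrow> 'v \<times> nat" and X :: "('v \<times> nat) set \<Rightarrow> bool"
  assumes b1: "\<beta> > 1"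
    and L: "labelled_4reg V opp"
    and hC: "\<forall>C\<in>circuits V opp. h C \<in> C"
    and sol: "\<forall>e\<in>EC V opp. \<forall>C D. e = {C, D} \<longrightarrow>
           ((X C \<noteq> X D) \<longleftrightarrow> A_cnt V opp \<beta> h e < D_cnt V opp \<beta> h e)"
    and h'C: "\<forall>C\<in>circuits V opp. (\<not> X C \<longrightarrow> h' C = h C) \<and>
           (X C \<longrightarrow> h' C \<in> {opp (h C), partner (h C)})"
    and e: "e \<in> EC V opp"
  shows "0 \<le> xw V opp \<beta> h' e \<and> xw V opp \<beta> h' e \<le> 1"
proof -
  have flip: "\<sigma> (h' C) = (\<sigma> (h C) \<noteq> X C)" if v: "valid_sigma V opp \<beta> \<sigma>" and C: "C \<in> circuits V opp" for \<sigma> C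
  proof -
    have hHE: "h C \<in> HE V" using hC C circ_HE[OF L C] by blast
    show ?thesis
    proof (cases "X C")
      case True
      then have "h' C = opp (h C) \<or> h' C = partner (h C)" using h'C C by blast
      then show ?thesis using valid_partner[OF v hHE] valid_opp[OF v hHE] True by auto
    next
      case False then show ?thesis using h'C C by simp
    qed
  qed
  obtain C D where CD: "e = {C, D}" "C \<in> circuits V opp" "D \<in> circuits V opp" "C \<noteq> D"
    using e unfolding EC_def by blast
  have pair: "(X C' = X D') = (X C = X D) \<and> C' \<in> circuits V opp \<and> D' \<in> circuits V opp"
    if "e = {C', D'}" for C' D'
  proof -
    have "(C' = C \<and> D' = D) \<or> (C' = D \<and> D' = C)" using that CD(1) by (metis doubleton_eq_iff)
    then show ?thesis using CD by auto
  qed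
  have ag: "agree_vertex V opp \<beta> h' v C' D' =
      (if X C = X D then agree_vertex V opp \<beta> h v C' D' else disagree_vertex V opp \<beta> h v C' D')"
    if "e = {C', D'}" for v C' D'
  proof -
    have p: "(X C' = X D') = (X C = X D)" "C' \<in> circuits V opp" "D' \<in> circuits V opp" using pair[OF that] by auto
    show ?thesis unfolding agree_vertex_def disagree_vertex_def
      using flip[OF _ p(2)] flip[OF _ p(3)] p(1) by auto
  qed
  have dg: "disagree_vertex V opp \<beta> h' v C' D' =
      (if X C = X D then disagree_vertex V opp \<beta> h v C' D' else agree_vertex V opp \<beta> h v C' D')"
    if "e = {C', D'}" for v C' D'
  proof -
    have p: "(X C' = X D') = (X C = X D)" "C' \<in> circuits V opp" "D' \<in> circuits V opp" using pair[OF that] by auto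
    show ?thesis unfolding agree_vertex_def disagree_vertex_def
      using flip[OF _ p(2)] flip[OF _ p(3)] p(1) by auto
  qed
  have ge: "D_cnt V opp \<beta> h' e \<le> A_cnt V opp \<beta> h' e"
  proof (cases "X C = X D")
    case True
    have ag': "agree_vertex V opp \<beta> h' v C' D' = agree_vertex V opp \<beta> h v C' D'" if "e = {C', D'}" for v C' D'
      using ag[OF that] True by simp
    have dg': "disagree_vertex V opp \<beta> h' v C' D' = disagree_vertex V opp \<beta> h v C' D'" if "e = {C', D'}" for v C' D'
      using dg[OF that] True by simp
    have "A_cnt V opp \<beta> h' e = A_cnt V opp \<beta> h e" unfolding A_cnt_def
      by (rule arg_cong[where f=card]) (use ag' in blast)
    moreover have "D_cnt V opp \<beta> h' e = D_cnt V opp \<beta> h e" unfolding D_cnt_def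
      by (rule arg_cong[where f=card]) (use dg' in blast)
    moreover have "\<not> A_cnt V opp \<beta> h e < D_cnt V opp \<beta> h e" using sol e CD(1) True by blast
    ultimately show ?thesis by simp
  next
    case False
    have ag': "agree_vertex V opp \<beta> h' v C' D' = disagree_vertex V opp \<beta> h v C' D'" if "e = {C', D'}" for v C' D'
      using ag[OF that] False by simp
    have dg': "disagree_vertex V opp \<beta> h' v C' D' = agree_vertex V opp \<beta> h v C' D'" if "e = {C', D'}" for v C' D'
      using dg[OF that] False by simp
    have "A_cnt V opp \<beta> h' e = D_cnt V opp \<beta> h e" unfolding A_cnt_def D_cnt_def
      by (rule arg_cong[where f=card]) (use ag' in blast)
    moreover have "D_cnt V opp \<beta> h' e = A_cnt V opp \<beta> h e" unfolding D_cnt_def A_cnt_def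
      by (rule arg_cong[where f=card]) (use dg' in blast)
    moreover have "A_cnt V opp \<beta> h e < D_cnt V opp \<beta> h e" using sol e CD(1) False by blast
    ultimately show ?thesis by simp
  qed
  define k where "k = int (A_cnt V opp \<beta> h' e) - int (D_cnt V opp \<beta> h' e)"
  have k0: "0 \<le> k" using ge k_def by simp
  define b where "b = \<beta> powi k"
  have "b = \<beta> ^ nat k" unfolding b_def using k0 by (simp add: power_int_def)
  then have b1': "1 \<le> b" using b1 by simp
  have xw: "xw V opp \<beta> h' e = (b - 1) / (b + 1)" unfolding xw_def Let_def b_def k_def by simp
  show ?thesis unfolding xw using b1' by simp
qed


theorem lemma6:
  fixes V :: "'v set" and opp :: "'v \<times> nat \<Rightarrow> 'v \<times> nat" and \<beta> :: real
    and h h' :: "('v \<times> nat) set \<Rightarrow> 'v \<times> nat" and X :: "('v \<times> nat) set \<Rightarrow> bool"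
  assumes "\<beta> > 1"
    and "labelled_4reg V opp"
    and "\<forall>C\<in>circuits V opp. h C \<in> C"
    and "\<forall>e\<in>EC V opp. \<forall>C D. e = {C, D} \<longrightarrow>
           ((X C \<noteq> X D) \<longleftrightarrow> A_cnt V opp \<beta> h e < D_cnt V opp \<beta> h e)"
    and "\<forall>C\<in>circuits V opp. (\<not> X C \<longrightarrow> h' C = h C) \<and>
           (X C \<longrightarrow> h' C \<in> {opp (h C), partner (h C)})"
  shows "\<exists>gam. (\<forall>a\<in>Omega_worm (circuits V opp) (EC V opp). \<forall>b\<in>Omega (circuits V opp) (EC V opp) 0.
                  is_worm_path (circuits V opp) (EC V opp) a b (gam a b)) \<and>
              congestion (circuits V opp) (EC V opp) (xw V opp \<beta> h') (Omega (circuits V opp) (EC V opp) 0) gam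
                \<le> real (card (circuits V opp)) ^ 5 * real (card (EC V opp))"
proof -
  have fV: "finite V" using assms(2) unfolding labelled_4reg_def by blast
  have fHE: "finite (HE V)" unfolding HE_def using fV by simp
  have fC: "finite (circuits V opp)"
  proof -
    have "circuits V opp = (\<lambda>h. (circ_step V opp)\<^sup>* `` {h}) ` HE V"
      unfolding circuits_def by blast
    then show ?thesis using fHE by simp
  qed
  have W: "wg (circuits V opp) (EC V opp) (xw V opp \<beta> h')"
  proof
    show "finite (circuits V opp)" by (rule fC)
    fix e assume e: "e \<in> EC V opp"
    then show "\<exists>p q. p \<in> circuits V opp \<and> q \<in> circuits V opp \<and> p \<noteq> q \<and> e = {p, q}"
      unfolding EC_def by blast
    show "0 \<le> xw V opp \<beta> h' e" using xw_props[OF assms e] by blast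
    show "xw V opp \<beta> h' e \<le> 1" using xw_props[OF assms e] by blast
  qed
  show ?thesis using wg.cong_main[OF W] by blast
qed

end
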